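(* Let $T$ be a c.n.u. contraction on $H$ and let $(H_+,H_-,\Gamma_+,\Gamma_-)$ be a boundary quadruple for $A_T^{\perp_s}$ with contractive Weyl function $B$. Then the localized kernel $\mathcal{K}$ satisfies: for $\lambda,\mu\in\mathbb{D}_+$: $\mathcal{K}(\lambda,\mu)=\dfrac{I-B(\lambda)B(\mu)^*}{1-\lambda\bar\mu}$; for $\lambda,\mu\in\mathbb{D}_-$: $\mathcal{K}(\lambda,\mu)=\dfrac{I-B(\bar\lambda)^*B(\bar\mu)}{1-\lambda\bar\mu}$; for $\lambda\in\mathbb{D}_+$, $\mu\in\mathbb{D}_-$: $\mathcal{K}(\lambda,\mu)=\dfrac{B(\lambda)-B(\bar\mu)}{\lambda-\bar\mu}$; for $\lambda\in\mathbb{D}_-$, $\mu\in\mathbb{D}_+$: $\mathcal{K}(\lambda,\mu)=\dfrac{B(\bar\lambda)^*-B(\mu)^*}{\lambda-\bar\mu}$; where in the last two cases, when $\lambda=\bar\mu$, the right-hand side is understood as its limit.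
   Context: $H$ is an infinite-dimensional separable complex Hilbert space with inner product $(\cdot,\cdot)_H$; $T\in\mathbb{B}(H)$, $\|T\|\le1$, is completely non-unitary. $\mathbb{K}=\ker(I-T^*T)$. $\mathbb{H}=H\oplus_\perp H$ with $[(x_1,x_2),(y_1,y_2)]=i(x_1,y_1)_H-i(x_2,y_2)_H$; $S^{\perp_s}=\{a:[a,b]=0\ \forall b\in S\}$; $A_T=\{(x,Tx):x\in\mathbb{K}\}$. $\mathbb{D}_\pm$ are two copies of the open unit disc; for $\lambda\in\mathbb{D}_\pm$, $\bar\lambda$ (conjugate coordinate) is regarded as a point of $\mathbb{D}_\mp$. $N_\lambda=\{(x,\lambda x)\}\cap A_T^{\perp_s}$ ($\lambda\in\mathbb{D}_+$), $N_\lambda=\{(\lambda x,x)\}\cap A_T^{\perp_s}$ ($\lambda\in\mathbb{D}_-$), $x$ ranging over $H$. A boundary quadruple: Hilbert spaces $H_\pm$ and linear $\Gamma_\pm:A_T^{\perp_s}\to H_\pm$ with $(\Gamma_+,\Gamma_-)$ bounded, onto $H_+\oplus_\perp H_-$, kernel $A_T$, and $[a,b]=i(\Gamma_+a,\Gamma_+b)-i(\Gamma_-a,\Gamma_-b)$. Then for $\lambda\in\mathbb{D}_+$, $\Gamma_+|_{N_\lambda}$ is a bijection onto $H_+$ and $\Gamma_-a=B(\lambda)\Gamma_+a$ ($a\in N_\lambda$) for a unique $B(\lambda)\in\mathbb{B}(H_+,H_-)$, $\|B(\lambda)\|<1$, holomorphic in $\lambda$; for $\lambda\in\mathbb{D}_-$,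 $\Gamma_-|_{N_\lambda}$ is a bijection onto $H_-$ and $\Gamma_+a=B(\bar\lambda)^*\Gamma_-a$. $\gamma_+(\lambda)x\in N_\lambda$ with $\Gamma_+\gamma_+(\lambda)x=x$ ($\lambda\in\mathbb{D}_+,x\in H_+$); $\gamma_-(\lambda)x\in N_\lambda$ with $\Gamma_-\gamma_-(\lambda)x=x$ ($\lambda\in\mathbb{D}_-,x\in H_-$). $\varphi_+=pr_1\circ\gamma_+$, $\varphi_-=pr_2\circ\gamma_-$ ($pr_i$: projection of $\mathbb{H}$ onto the $i$-th copy of $H$). Bundles: $E_\lambda=pr_1(N_\lambda)$ ($\lambda\in\mathbb{D}_+$), $E_\lambda=pr_2(N_\lambda)$ ($\lambda\in\mathbb{D}_-$); $F^\dagger_\lambda=E_{\bar\lambda}$; $F_\lambda$ = continuous conjugate-linear functionals on $F^\dagger_\lambda$, pairing $((\cdot,\cdot))$. For $x\in H$, $\hat x(\lambda)\in F_\lambda$ is $\omega\mapsto(x,\omega)_H$. Trivialization: for $\lambda\in\mathbb{D}_+$ define $\varphi_-^\dagger(\lambda):F_\lambda\to H_-$ by $(\varphi_-^\dagger(\lambda)\omega,y)_{H_-}=((\omega,\varphi_-(\bar\lambda)y))$ for all $y\in H_-$; for $\lambda\in\mathbb{D}_-$ define $\varphi_+^\dagger(\lambda):F_\lambda\to H_+$ by $(\varphi_+^\dagger(\lambda)\omega,y)_{H_+}=((\omega,\varphi_+(\bar\lambda)y))$. For a section $s$ of $F$, $f_s(\lambda)=\varphi_-^\dagger(\lambda)s(\lambda)\in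 H_-$ for $\lambda\in\mathbb{D}_+$ and $f_s(\lambda)=\varphi_+^\dagger(\lambda)s(\lambda)\in H_+$ for $\lambda\in\mathbb{D}_-$. The localized kernel: for $\mu\in\mathbb{D}_+$, $\mathcal{K}(\lambda,\mu)y:=f_{\hat z}(\lambda)$ with $z=\varphi_-(\bar\mu)y$, $y\in H_-$; for $\mu\in\mathbb{D}_-$, $\mathcal{K}(\lambda,\mu)y:=f_{\hat z}(\lambda)$ with $z=\varphi_+(\bar\mu)y$, $y\in H_+$. (This is the kernel $K(\lambda,\mu)=\iota_\lambda^\dagger\iota_\mu$ of the model space written in these trivializations.) *)

theory Defs
  imports "HOL-Analysis.Analysis"
begin

text \<open>The separable infinite-dimensional complex Hilbert space H is modelled concretely
  as l2(N, C) (all such spaces are unitarily equivalent).  The auxiliary Hilbert spaces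
  H+ and H- of a boundary quadruple are modelled as closed subspaces of l2 (every
  separable Hilbert space embeds isometrically as such, and H+, H- are separable
  being continuous linear images of a subspace of H x H).\<close>

type_synonym vec = "nat \<Rightarrow> complex"

definition l2 :: "vec set" where
  "l2 = {x. summable (\<lambda>n. (cmod (x n))^2)}"

definition ip :: "vec \<Rightarrow> vec \<Rightarrow> complex" where
  "ip x y = (\<Sum>n. x n * cnj (y n))"

definition l2norm :: "vec \<Rightarrow> real" where
  "l2norm x = sqrt (\<Sum>n. (cmod (x n))^2)"

definition vzero :: vec where "vzero = (\<lambda>n. 0)"
definition vadd :: "vec \<Rightarrow> vec \<Rightarrow> vec" where "vadd x y = (\<lambda>n. x n + y n)"
definition vsub :: "vec \<Rightarrow> vec \<Rightarrow> vec" where "vsub x y = (\<lambda>n. x n - y n)"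
definition vsc :: "complex \<Rightarrow> vec \<Rightarrow> vec" where "vsc c x = (\<lambda>n. c * x n)"

definition closed_subspace :: "vec set \<Rightarrow> bool" where
  "closed_subspace S \<longleftrightarrow> S \<subseteq> l2 \<and> vzero \<in> S \<and>
     (\<forall>x\<in>S. \<forall>y\<in>S. vadd x y \<in> S) \<and> (\<forall>c. \<forall>x\<in>S. vsc c x \<in> S) \<and>
     (\<forall>X x. (\<forall>k. X k \<in> S) \<and> x \<in> l2 \<and> (\<lambda>k. l2norm (vsub (X k) x)) \<longlonglongrightarrow> 0 \<longrightarrow> x \<in> S)"

definition linear_on :: "vec set \<Rightarrow> (vec \<Rightarrow> vec) \<Rightarrow> bool" where
  "linear_on S f \<longleftrightarrow> (\<forall>x\<in>S. \<forall>y\<in>S. f (vadd x y) = vadd (f x) (f y)) \<and>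
                     (\<forall>c. \<forall>x\<in>S. f (vsc c x) = vsc c (f x))"

definition bounded_op :: "vec set \<Rightarrow> vec set \<Rightarrow> (vec \<Rightarrow> vec) \<Rightarrow> bool" where
  "bounded_op S1 S2 f \<longleftrightarrow> (\<forall>x\<in>S1. f x \<in> S2) \<and> linear_on S1 f \<and>
                          (\<exists>C. \<forall>x\<in>S1. l2norm (f x) \<le> C * l2norm x)"

definition opadj :: "vec set \<Rightarrow> (vec \<Rightarrow> vec) \<Rightarrow> vec \<Rightarrow> vec" where
  "opadj S1 f y = (THE x. x \<in> S1 \<and> (\<forall>x'\<in>S1. ip (f x') y = ip x' x))"

definition contraction :: "(vec \<Rightarrow> vec) \<Rightarrow> bool" where
  "contraction T \<longleftrightarrow> bounded_op l2 l2 T \<and> (\<forall>x\<in>l2. l2norm (T x) \<le> l2norm x)"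

definition cnu :: "(vec \<Rightarrow> vec) \<Rightarrow> bool" where
  "cnu T \<longleftrightarrow> \<not> (\<exists>M. closed_subspace M \<and> M \<noteq> {vzero} \<and> T ` M \<subseteq> M \<and> opadj l2 T ` M \<subseteq> M \<and>
       (\<forall>x\<in>M. opadj l2 T (T x) = x \<and> T (opadj l2 T x) = x))"

definition defect_ker :: "(vec \<Rightarrow> vec) \<Rightarrow> vec set" where
  "defect_ker T = {x \<in> l2. opadj l2 T (T x) = x}"

definition sform :: "vec \<times> vec \<Rightarrow> vec \<times> vec \<Rightarrow> complex" where
  "sform a b = \<i> * ip (fst a) (fst b) - \<i> * ip (snd a) (snd b)"

definition sperp :: "(vec \<times> vec) set \<Rightarrow> (vec \<times> vec) set" where
  "sperp S = {a. fst a \<in> l2 \<and> snd a \<in> l2 \<and> (\<forall>b\<in>S. sform a b = 0)}"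

definition A_T :: "(vec \<Rightarrow> vec) \<Rightarrow> (vec \<times> vec) set" where
  "A_T T = {(x, T x) | x. x \<in> defect_ker T}"

definition padd :: "vec \<times> vec \<Rightarrow> vec \<times> vec \<Rightarrow> vec \<times> vec" where
  "padd a b = (vadd (fst a) (fst b), vadd (snd a) (snd b))"
definition psc :: "complex \<Rightarrow> vec \<times> vec \<Rightarrow> vec \<times> vec" where
  "psc c a = (vsc c (fst a), vsc c (snd a))"

definition boundary_quadruple ::
  "(vec \<Rightarrow> vec) \<Rightarrow> vec set \<Rightarrow> vec set \<Rightarrow> (vec \<times> vec \<Rightarrow> vec) \<Rightarrow> (vec \<times> vec \<Rightarrow> vec) \<Rightarrow> bool" where
  "boundary_quadruple T Hp Hm Gp Gm \<longleftrightarrow>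
     closed_subspace Hp \<and> closed_subspace Hm \<and>
     (\<forall>a\<in>sperp (A_T T). Gp a \<in> Hp \<and> Gm a \<in> Hm) \<and>
     (\<forall>a\<in>sperp (A_T T). \<forall>b\<in>sperp (A_T T).
        Gp (padd a b) = vadd (Gp a) (Gp b) \<and> Gm (padd a b) = vadd (Gm a) (Gm b)) \<and>
     (\<forall>c. \<forall>a\<in>sperp (A_T T). Gp (psc c a) = vsc c (Gp a) \<and> Gm (psc c a) = vsc c (Gm a)) \<and>
     (\<exists>C. \<forall>a\<in>sperp (A_T T).
        (l2norm (Gp a))^2 + (l2norm (Gm a))^2 \<le> C * ((l2norm (fst a))^2 + (l2norm (snd a))^2)) \<and>
     (\<forall>x\<in>Hp. \<forall>y\<in>Hm. \<exists>a\<in>sperp (A_T T). Gp a = x \<and> Gm a = y) \<and>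
     {a \<in> sperp (A_T T). Gp a = vzero \<and> Gm a = vzero} = A_T T \<and>
     (\<forall>a\<in>sperp (A_T T). \<forall>b\<in>sperp (A_T T).
        sform a b = \<i> * ip (Gp a) (Gp b) - \<i> * ip (Gm a) (Gm b))"

text \<open>Points of the two discs \<open>\<bbbD>\<^sub>+\<close> (sheet Pl) and \<open>\<bbbD>\<^sub>-\<close> (sheet Mi), given by a
  sheet and the coordinate.\<close>
datatype sheet = Pl | Mi

type_synonym pt = "sheet \<times> complex"

fun flip :: "sheet \<Rightarrow> sheet" where "flip Pl = Mi" | "flip Mi = Pl"

definition ptbar :: "pt \<Rightarrow> pt" where "ptbar p = (flip (fst p), cnj (snd p))"

definition Nsp :: "(vec \<Rightarrow> vec) \<Rightarrow> pt \<Rightarrow> (vec \<times> vec) set" where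
  "Nsp T p = (case fst p of
       Pl \<Rightarrow> {(x, vsc (snd p) x) | x. x \<in> l2}
     | Mi \<Rightarrow> {(vsc (snd p) x, x) | x. x \<in> l2}) \<inter> sperp (A_T T)"

definition weyl_function ::
  "(vec \<Rightarrow> vec) \<Rightarrow> vec set \<Rightarrow> vec set \<Rightarrow> (vec \<times> vec \<Rightarrow> vec) \<Rightarrow> (vec \<times> vec \<Rightarrow> vec)
   \<Rightarrow> (complex \<Rightarrow> vec \<Rightarrow> vec) \<Rightarrow> bool" where
  "weyl_function T Hp Hm Gp Gm B \<longleftrightarrow>
     (\<forall>c. cmod c < 1 \<longrightarrow> bounded_op Hp Hm (B c) \<and> (\<forall>a\<in>Nsp T (Pl, c). Gm a = B c (Gp a)))"

definition gam ::
  "(vec \<Rightarrow> vec) \<Rightarrow> (vec \<times> vec \<Rightarrow> vec) \<Rightarrow> (vec \<times> vec \<Rightarrow> vec) \<Rightarrow> pt \<Rightarrow> vec \<Rightarrow> vec \<times> vec" where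
  "gam T Gp Gm p x = (THE a. a \<in> Nsp T p \<and> (case fst p of Pl \<Rightarrow> Gp a | Mi \<Rightarrow> Gm a) = x)"

definition phi ::
  "(vec \<Rightarrow> vec) \<Rightarrow> (vec \<times> vec \<Rightarrow> vec) \<Rightarrow> (vec \<times> vec \<Rightarrow> vec) \<Rightarrow> pt \<Rightarrow> vec \<Rightarrow> vec" where
  "phi T Gp Gm p x = (case fst p of Pl \<Rightarrow> fst (gam T Gp Gm p x) | Mi \<Rightarrow> snd (gam T Gp Gm p x))"

text \<open>Bundles \<open>E\<close>, \<open>F\<^sup>\<dagger>\<close> and the fibres \<open>F\<^sub>\<lambda>\<close> (continuous conjugate-linear functionals on
  \<open>F\<^sup>\<dagger>\<^sub>\<lambda>\<close>, pairing = evaluation).\<close>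
definition Ebun :: "(vec \<Rightarrow> vec) \<Rightarrow> pt \<Rightarrow> vec set" where
  "Ebun T p = (case fst p of Pl \<Rightarrow> fst ` Nsp T p | Mi \<Rightarrow> snd ` Nsp T p)"

definition Fdag :: "(vec \<Rightarrow> vec) \<Rightarrow> pt \<Rightarrow> vec set" where
  "Fdag T p = Ebun T (ptbar p)"

definition Ffib :: "(vec \<Rightarrow> vec) \<Rightarrow> pt \<Rightarrow> (vec \<Rightarrow> complex) set" where
  "Ffib T p = {\<omega>. (\<forall>x\<in>Fdag T p. \<forall>y\<in>Fdag T p. \<omega> (vadd x y) = \<omega> x + \<omega> y) \<and>
                  (\<forall>c. \<forall>x\<in>Fdag T p. \<omega> (vsc c x) = cnj c * \<omega> x) \<and>
                  (\<exists>C. \<forall>x\<in>Fdag T p. cmod (\<omega> x) \<le> C * l2norm x)}"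

definition hat :: "vec \<Rightarrow> pt \<Rightarrow> (vec \<Rightarrow> complex)" where
  "hat x p = (\<lambda>\<omega>. ip x \<omega>)"

text \<open>Trivialization: for \<open>\<lambda> \<in> \<bbbD>\<^sub>+\<close> the map \<open>\<phi>\<^sub>-\<^sup>\<dagger>(\<lambda>) : F\<^sub>\<lambda> \<rightarrow> H\<^sub>-\<close>, for \<open>\<lambda> \<in> \<bbbD>\<^sub>-\<close> the map
  \<open>\<phi>\<^sub>+\<^sup>\<dagger>(\<lambda>) : F\<^sub>\<lambda> \<rightarrow> H\<^sub>+\<close>.\<close>
definition tgt :: "vec set \<Rightarrow> vec set \<Rightarrow> pt \<Rightarrow> vec set" where
  "tgt Hp Hm p = (case fst p of Pl \<Rightarrow> Hm | Mi \<Rightarrow> Hp)"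

definition phidag ::
  "(vec \<Rightarrow> vec) \<Rightarrow> vec set \<Rightarrow> vec set \<Rightarrow> (vec \<times> vec \<Rightarrow> vec) \<Rightarrow> (vec \<times> vec \<Rightarrow> vec)
   \<Rightarrow> pt \<Rightarrow> (vec \<Rightarrow> complex) \<Rightarrow> vec" where
  "phidag T Hp Hm Gp Gm p \<omega> =
     (THE w. w \<in> tgt Hp Hm p \<and> (\<forall>y\<in>tgt Hp Hm p. ip w y = \<omega> (phi T Gp Gm (ptbar p) y)))"

definition fsec ::
  "(vec \<Rightarrow> vec) \<Rightarrow> vec set \<Rightarrow> vec set \<Rightarrow> (vec \<times> vec \<Rightarrow> vec) \<Rightarrow> (vec \<times> vec \<Rightarrow> vec)
   \<Rightarrow> (pt \<Rightarrow> vec \<Rightarrow> complex) \<Rightarrow> pt \<Rightarrow> vec" where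
  "fsec T Hp Hm Gp Gm s p = phidag T Hp Hm Gp Gm p (s p)"

definition Kloc ::
  "(vec \<Rightarrow> vec) \<Rightarrow> vec set \<Rightarrow> vec set \<Rightarrow> (vec \<times> vec \<Rightarrow> vec) \<Rightarrow> (vec \<times> vec \<Rightarrow> vec)
   \<Rightarrow> pt \<Rightarrow> pt \<Rightarrow> vec \<Rightarrow> vec" where
  "Kloc T Hp Hm Gp Gm p q y = fsec T Hp Hm Gp Gm (hat (phi T Gp Gm (ptbar q) y)) p"

end

theory Submission
  imports Defs
begin

lemma vadd_app: "vadd x y n = x n + y n" by (simp add: vadd_def)
lemma vsub_app: "vsub x y n = x n - y n" by (simp add: vsub_def)
lemma vsc_app: "vsc c x n = c * x n" by (simp add: vsc_def)
lemma vzero_app: "vzero n = 0" by (simp add: vzero_def)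

lemmas vapp = vadd_app vsub_app vsc_app vzero_app

lemma l2_iff: "x \<in> l2 \<longleftrightarrow> summable (\<lambda>n. (cmod (x n))^2)" by (simp add: vapp l2_def)

lemma sq_le_two: "(cmod (a + b))^2 \<le> 2 * (cmod a)^2 + 2 * (cmod b)^2"
proof -
  have "cmod (a+b) \<le> cmod a + cmod b" by (rule norm_triangle_ineq)
  hence "(cmod (a + b))^2 \<le> (cmod a + cmod b)^2" by (simp add: vapp power_mono)
  also have "\<dots> \<le> 2 * (cmod a)^2 + 2 * (cmod b)^2"
    by (smt (verit) sum_squares_bound norm_ge_zero power2_sum)
  finally show ?thesis .
qed

lemma l2_vzero[simp]: "vzero \<in> l2" by (simp add: vapp l2_def vzero_def)

lemma l2_vadd[simp]: assumes "x \<in> l2" "y \<in> l2" shows "vadd x y \<in> l2"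
  unfolding l2_iff
proof (rule summable_comparison_test[where g="\<lambda>n. 2 * (cmod (x n))^2 + 2 * (cmod (y n))^2"])
  show "summable (\<lambda>n. 2 * (cmod (x n))^2 + 2 * (cmod (y n))^2)"
    using assms by (auto intro!: summable_add summable_mult simp: l2_iff)
qed (auto simp: vapp sq_le_two)

lemma l2_vsc[simp]: "x \<in> l2 \<Longrightarrow> vsc c x \<in> l2"
  unfolding l2_def by (simp add: vapp norm_mult power_mult_distrib summable_mult)

lemma vsub_eq: "vsub x y = vadd x (vsc (-1) y)" by (simp add: vapp fun_eq_iff)

lemma l2_vsub[simp]: "x \<in> l2 \<Longrightarrow> y \<in> l2 \<Longrightarrow> vsub x y \<in> l2"
  by (simp add: vapp vsub_eq)

lemma summable_ip: assumes "x \<in> l2" "y \<in> l2" shows "summable (\<lambda>n. x n * cnj (y n))"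
proof -
  have "summable (\<lambda>n. norm (x n * cnj (y n)))"
  proof (rule summable_comparison_test[where g="\<lambda>n. (cmod (x n))^2 + (cmod (y n))^2"])
    show "\<exists>N. \<forall>n\<ge>N. norm (norm (x n * cnj (y n))) \<le> (cmod (x n))\<^sup>2 + (cmod (y n))\<^sup>2"
    proof (intro exI allI impI)
      fix n
      have "2 * cmod (x n) * cmod (y n) \<le> (cmod (x n))\<^sup>2 + (cmod (y n))\<^sup>2" by (rule sum_squares_bound)
      moreover have "0 \<le> cmod (x n) * cmod (y n)" by simp
      ultimately have "cmod (x n) * cmod (y n) \<le> (cmod (x n))\<^sup>2 + (cmod (y n))\<^sup>2" by linarith
      thus "norm (norm (x n * cnj (y n))) \<le> (cmod (x n))\<^sup>2 + (cmod (y n))\<^sup>2"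
        by (simp add: vapp norm_mult)
    qed
    show "summable (\<lambda>n. (cmod (x n))\<^sup>2 + (cmod (y n))\<^sup>2)"
      using assms by (auto intro!: summable_add simp: l2_def)
  qed
  thus ?thesis by (rule summable_norm_cancel)
qed

lemma ip_vadd1: "x \<in> l2 \<Longrightarrow> y \<in> l2 \<Longrightarrow> z \<in> l2 \<Longrightarrow> ip (vadd x y) z = ip x z + ip y z"
  unfolding ip_def by (simp add: vapp distrib_right suminf_add summable_ip)
lemma ip_vsc1: "x \<in> l2 \<Longrightarrow> z \<in> l2 \<Longrightarrow> ip (vsc c x) z = c * ip x z"
  unfolding ip_def by (simp add: vapp mult.assoc suminf_mult summable_ip)
lemma ip_cnj: assumes "x \<in> l2" "y \<in> l2" shows "ip y x = cnj (ip x y)"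
  unfolding ip_def
proof -
  have "(\<Sum>n. y n * cnj (x n)) = (\<Sum>n. cnj (x n * cnj (y n)))" by (simp add: vapp mult.commute)
  also have "\<dots> = cnj (\<Sum>n. x n * cnj (y n))"
    using sums_cnj[of "\<lambda>n. x n * cnj (y n)"] summable_ip[OF assms]
      by (metis summable_sums sums_unique)
  finally show "(\<Sum>n. y n * cnj (x n)) = cnj (\<Sum>n. x n * cnj (y n))" .
qed
lemma ip_vadd2: "x \<in> l2 \<Longrightarrow> y \<in> l2 \<Longrightarrow> z \<in> l2 \<Longrightarrow> ip z (vadd x y) = ip z x + ip z y"
  by (metis ip_cnj ip_vadd1 complex_cnj_add l2_vadd)
lemma ip_vsc2: "x \<in> l2 \<Longrightarrow> z \<in> l2 \<Longrightarrow> ip z (vsc c x) = cnj c * ip z x"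
  by (metis ip_cnj ip_vsc1 complex_cnj_mult l2_vsc)
lemma ip_vsub1: "x \<in> l2 \<Longrightarrow> y \<in> l2 \<Longrightarrow> z \<in> l2 \<Longrightarrow> ip (vsub x y) z = ip x z - ip y z"
  by (simp add: vapp vsub_eq ip_vadd1 ip_vsc1)
lemma ip_vsub2: "x \<in> l2 \<Longrightarrow> y \<in> l2 \<Longrightarrow> z \<in> l2 \<Longrightarrow> ip z (vsub x y) = ip z x - ip z y"
  by (simp add: vapp vsub_eq ip_vadd2 ip_vsc2)
lemma ip_vzero1[simp]: "ip vzero z = 0" by (simp add: vapp ip_def)
lemma ip_vzero2[simp]: "ip z vzero = 0" by (simp add: vapp ip_def)

lemma suminf_sq_nonneg: "x \<in> l2 \<Longrightarrow> 0 \<le> (\<Sum>n. (cmod (x n))^2)"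
  by (auto intro: suminf_nonneg simp: l2_def)

lemma l2norm_nonneg[simp]: "x \<in> l2 \<Longrightarrow> 0 \<le> l2norm x" by (simp add: vapp l2norm_def suminf_sq_nonneg)

lemma l2norm_sq: "x \<in> l2 \<Longrightarrow> (l2norm x)^2 = (\<Sum>n. (cmod (x n))^2)"
  by (simp add: vapp l2norm_def suminf_sq_nonneg)

lemma ip_self: assumes "x \<in> l2" shows "ip x x = complex_of_real ((l2norm x)^2)"
proof -
  have "ip x x = (\<Sum>n. complex_of_real ((cmod (x n))^2))"
    unfolding ip_def by (simp only: complex_norm_square)
  also have "\<dots> = complex_of_real (\<Sum>n. (cmod (x n))^2)"
    using assms by (simp add: vapp l2_def suminf_of_real)
  finally show ?thesis by (simp add: vapp l2norm_sq assms)
qed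

lemma l2norm_sq_ip: "x \<in> l2 \<Longrightarrow> (l2norm x)^2 = Re (ip x x)"
  by (simp add: vapp ip_self)

lemma l2norm_zero: assumes "x \<in> l2" "l2norm x = 0" shows "x = vzero"
proof -
  have "(\<Sum>n. (cmod (x n))^2) = 0" using assms l2norm_sq[of x] by simp
  hence "\<forall>n. (cmod (x n))^2 = 0" using assms by (subst (asm) suminf_eq_zero_iff) (auto simp: vapp l2_def)
  thus ?thesis by (simp add: vapp fun_eq_iff)
qed

lemma ip_self_zero: "x \<in> l2 \<Longrightarrow> ip x x = 0 \<Longrightarrow> x = vzero"
  by (simp add: vapp ip_self l2norm_zero)

lemma l2norm_vzero[simp]: "l2norm vzero = 0" by (simp add: vapp l2norm_def)

lemma coord_le: assumes "x \<in> l2" shows "cmod (x j) \<le> l2norm x"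
proof -
  have "(cmod (x j))^2 \<le> (\<Sum>n. (cmod (x n))^2)"
    using assms unfolding l2_def
    using sum_le_suminf[of "\<lambda>n. (cmod (x n))^2" "{j}"] by auto
  thus ?thesis by (simp add: vapp l2norm_def real_le_rsqrt suminf_sq_nonneg assms)
qed


lemma nsq_vadd: "x \<in> l2 \<Longrightarrow> y \<in> l2 \<Longrightarrow>
  (l2norm (vadd x y))^2 = (l2norm x)^2 + 2 * Re (ip x y) + (l2norm y)^2"
  by (simp add: l2norm_sq_ip ip_vadd1 ip_vadd2 ip_cnj[of x y])
lemma nsq_vsub: "x \<in> l2 \<Longrightarrow> y \<in> l2 \<Longrightarrow>
  (l2norm (vsub x y))^2 = (l2norm x)^2 - 2 * Re (ip x y) + (l2norm y)^2"
  by (simp add: l2norm_sq_ip ip_vsub1 ip_vsub2 ip_cnj[of x y])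
lemma nsq_vsc: "x \<in> l2 \<Longrightarrow> (l2norm (vsc c x))^2 = (cmod c)^2 * (l2norm x)^2"
proof -
  assume x: "x \<in> l2"
  have "ip (vsc c x) (vsc c x) = (c * cnj c) * ip x x" using x by (simp add: ip_vsc1 ip_vsc2)
  also have "c * cnj c = complex_of_real ((cmod c)^2)" by (rule complex_norm_square[symmetric])
  also have "ip x x = complex_of_real ((l2norm x)^2)" using x by (rule ip_self)
  finally have "ip (vsc c x) (vsc c x) = complex_of_real ((cmod c)^2 * (l2norm x)^2)" by simp
  thus ?thesis using x by (simp only: l2norm_sq_ip l2_vsc Re_complex_of_real)
qed

lemma l2norm_vsc: "x \<in> l2 \<Longrightarrow> l2norm (vsc c x) = cmod c * l2norm x"
proof -
  assume x: "x \<in> l2"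
  have "(l2norm (vsc c x))^2 = (cmod c * l2norm x)^2" using nsq_vsc[OF x] by (simp add: power_mult_distrib)
  thus ?thesis using x by (simp add: power2_eq_iff_nonneg)
qed

lemma cauchy_schwarz: assumes x: "x \<in> l2" and y: "y \<in> l2"
  shows "cmod (ip x y) \<le> l2norm x * l2norm y"
proof (cases "l2norm y = 0")
  case True then have "y = vzero" using l2norm_zero y by blast
  then show ?thesis using x by simp
next
  case False
  define n where "n = (l2norm y)^2"
  have n: "n > 0" using False y unfolding n_def by (simp add: order_le_neq_trans)
  define p where "p = ip x y"
  define t where "t = p / complex_of_real n"
  have w: "vsub x (vsc t y) \<in> l2" using x y by simp
  have "0 \<le> (l2norm (vsub x (vsc t y)))^2" by simp
  also have "\<dots> = (l2norm x)^2 - 2 * Re (ip x (vsc t y)) + (cmod t)^2 * n"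
    using x y by (simp add: nsq_vsub nsq_vsc n_def)
  also have "ip x (vsc t y) = cnj t * p" using x y by (simp add: ip_vsc2 p_def)
  also have "cnj t * p = complex_of_real ((cmod p)^2 / n)"
  proof -
    have "cnj t * p = (p * cnj p) / complex_of_real n" by (simp add: t_def)
    also have "p * cnj p = complex_of_real ((cmod p)^2)" by (rule complex_norm_square[symmetric])
    finally show ?thesis by simp
  qed
  also have "Re (complex_of_real ((cmod p)^2 / n)) = (cmod p)^2 / n" by simp
  also have "(cmod t)^2 * n = (cmod p)^2 / n"
    unfolding t_def using n by (simp add: norm_divide power_divide power2_eq_square)
  finally have "(cmod p)^2 / n \<le> (l2norm x)^2" by simp
  hence "(cmod p)^2 \<le> (l2norm x)^2 * n" using n by (simp add: divide_le_eq)
  hence "(cmod p)^2 \<le> (l2norm x * l2norm y)^2" by (simp add: n_def power_mult_distrib)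
  thus ?thesis unfolding p_def using x y by (simp add: power2_le_iff_abs_le)
qed

lemma l2norm_triangle: assumes x: "x \<in> l2" and y: "y \<in> l2"
  shows "l2norm (vadd x y) \<le> l2norm x + l2norm y"
proof -
  have "Re (ip x y) \<le> l2norm x * l2norm y"
    using cauchy_schwarz[OF x y] complex_Re_le_cmod order_trans by blast
  hence "(l2norm (vadd x y))^2 \<le> (l2norm x + l2norm y)^2"
    using x y by (simp add: nsq_vadd power2_sum)
  thus ?thesis using x y by (simp add: power2_le_iff_abs_le)
qed

lemma vsub_tri: "vsub x z = vadd (vsub x y) (vsub y z)" by (simp add: fun_eq_iff vapp)

lemma l2norm_tri_sub: "x \<in> l2 \<Longrightarrow> y \<in> l2 \<Longrightarrow> z \<in> l2 \<Longrightarrow>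
   l2norm (vsub x z) \<le> l2norm (vsub x y) + l2norm (vsub y z)"
proof -
  assume a: "x \<in> l2" "y \<in> l2" "z \<in> l2"
  have "l2norm (vsub x z) = l2norm (vadd (vsub x y) (vsub y z))" by (simp only: vsub_tri[of x z y])
  also have "\<dots> \<le> l2norm (vsub x y) + l2norm (vsub y z)" using a by (intro l2norm_triangle) auto
  finally show ?thesis .
qed

lemma vsub_swap: "vsub x y = vsc (-1) (vsub y x)" by (simp add: fun_eq_iff vapp)
lemma l2norm_sub_comm: "x \<in> l2 \<Longrightarrow> y \<in> l2 \<Longrightarrow> l2norm (vsub x y) = l2norm (vsub y x)"
proof -
  assume a: "x \<in> l2" "y \<in> l2"
  have "l2norm (vsub x y) = l2norm (vsc (-1) (vsub y x))" by (simp only: vsub_swap[of x y])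
  also have "\<dots> = l2norm (vsub y x)" using a by (simp add: l2norm_vsc)
  finally show ?thesis .
qed

lemma l2norm_pos: "x \<in> l2 \<Longrightarrow> x \<noteq> vzero \<Longrightarrow> 0 < l2norm x"
  using l2norm_zero l2norm_nonneg by (metis order_le_neq_trans)

lemma vsub_self[simp]: "vsub x x = vzero" by (simp add: fun_eq_iff vapp)
lemma vsub_vzero[simp]: "vsub x vzero = x" by (simp add: fun_eq_iff vapp)
lemma vsub_eq_vzero: "vsub x y = vzero \<longleftrightarrow> x = y" by (auto simp: fun_eq_iff vapp)


definition lconv :: "(nat \<Rightarrow> vec) \<Rightarrow> vec \<Rightarrow> bool" where
  "lconv X x \<longleftrightarrow> (\<lambda>k. l2norm (vsub (X k) x)) \<longlonglongrightarrow> 0"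

definition subsp :: "vec set \<Rightarrow> bool" where
  "subsp M \<longleftrightarrow> M \<subseteq> l2 \<and> vzero \<in> M \<and> (\<forall>x\<in>M. \<forall>y\<in>M. vadd x y \<in> M) \<and> (\<forall>c. \<forall>x\<in>M. vsc c x \<in> M)"

lemma lconv_iff: "lconv X x \<longleftrightarrow> (\<forall>e>0. \<exists>N. \<forall>k\<ge>N. \<bar>l2norm (vsub (X k) x)\<bar> < e)"
  unfolding lconv_def LIMSEQ_iff by simp

lemma l2_complete:
  assumes X: "\<And>k. X k \<in> l2"
    and C: "\<And>e. e > 0 \<Longrightarrow> \<exists>N. \<forall>m\<ge>N. \<forall>n\<ge>N. l2norm (vsub (X m) (X n)) < e"
  shows "\<exists>x\<in>l2. lconv X x"
proof -
  have cj: "Cauchy (\<lambda>k. X k j)" for j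
    unfolding Cauchy_def dist_norm
  proof (intro allI impI)
    fix e :: real assume "e > 0"
    then obtain N where N: "\<forall>m\<ge>N. \<forall>n\<ge>N. l2norm (vsub (X m) (X n)) < e" using C by blast
    show "\<exists>M. \<forall>m\<ge>M. \<forall>n\<ge>M. cmod (X m j - X n j) < e"
    proof (intro exI allI impI)
      fix m n assume "N \<le> m" "N \<le> n"
      hence "l2norm (vsub (X m) (X n)) < e" using N by blast
      moreover have "cmod (vsub (X m) (X n) j) \<le> l2norm (vsub (X m) (X n))"
        using X by (intro coord_le) auto
      ultimately show "cmod (X m j - X n j) < e" by (simp add: vapp)
    qed
  qed
  define x where "x j = lim (\<lambda>k. X k j)" for j
  have xl: "(\<lambda>k. X k j) \<longlonglongrightarrow> x j" for j
    unfolding x_def using cj[of j] by (simp add: Cauchy_convergent_iff convergent_LIMSEQ_iff)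
  have main: "\<exists>N. \<forall>m\<ge>N. vsub (X m) x \<in> l2 \<and> l2norm (vsub (X m) x) \<le> e" if e: "e > 0" for e
  proof -
    obtain N where N: "\<forall>m\<ge>N. \<forall>n\<ge>N. l2norm (vsub (X m) (X n)) < e" using C e by blast
    show ?thesis
    proof (intro exI allI impI)
      fix m assume m: "N \<le> m"
      have ps: "(\<Sum>j<J. (cmod (X m j - x j))^2) \<le> e^2" for J
      proof -
        have lim: "(\<lambda>n. \<Sum>j<J. (cmod (X m j - X n j))^2) \<longlonglongrightarrow> (\<Sum>j<J. (cmod (X m j - x j))^2)"
          by (intro tendsto_sum tendsto_power tendsto_norm tendsto_diff tendsto_const xl)
        have "\<forall>n\<ge>N. (\<Sum>j<J. (cmod (X m j - X n j))^2) \<le> e^2"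
        proof (intro allI impI)
          fix n assume n: "N \<le> n"
          have l2d: "vsub (X m) (X n) \<in> l2" using X by simp
          have "(\<Sum>j<J. (cmod (X m j - X n j))^2) = (\<Sum>j<J. (cmod (vsub (X m) (X n) j))^2)"
            by (simp add: vapp)
          also have "\<dots> \<le> (\<Sum>j. (cmod (vsub (X m) (X n) j))^2)"
            using l2d unfolding l2_iff by (intro sum_le_suminf) auto
          also have "\<dots> = (l2norm (vsub (X m) (X n)))^2" using l2d by (simp add: l2norm_sq)
          also have "\<dots> \<le> e^2" using N m n l2d
            by (intro power_mono) (auto intro: less_imp_le)
          finally show "(\<Sum>j<J. (cmod (X m j - X n j))^2) \<le> e^2" .
        qed
        thus ?thesis using lim by (intro LIMSEQ_le_const2[OF lim]) auto
      qed
      have sm: "summable (\<lambda>j. (cmod (X m j - x j))^2)"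
        using ps by (intro summableI_nonneg_bounded) auto
      hence inl2: "vsub (X m) x \<in> l2" by (simp add: l2_iff vapp)
      have "(\<Sum>j. (cmod (X m j - x j))^2) \<le> e^2" using sm ps by (intro suminf_le_const) auto
      hence "(l2norm (vsub (X m) x))^2 \<le> e^2" using inl2 by (simp add: l2norm_sq vapp)
      hence "l2norm (vsub (X m) x) \<le> e" using e inl2 by (simp add: power2_le_iff_abs_le)
      thus "vsub (X m) x \<in> l2 \<and> l2norm (vsub (X m) x) \<le> e" using inl2 by simp
    qed
  qed
  obtain N where "\<forall>m\<ge>N. vsub (X m) x \<in> l2 \<and> l2norm (vsub (X m) x) \<le> 1" using main[of 1] by auto
  hence d: "vsub (X N) x \<in> l2" by simp
  have "x = vsub (X N) (vsub (X N) x)" by (simp add: fun_eq_iff vapp)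
  hence xin: "x \<in> l2" using d X by (metis l2_vsub)
  have "lconv X x" unfolding lconv_iff
  proof (intro allI impI)
    fix e :: real assume e: "e > 0"
    obtain N where N: "\<forall>m\<ge>N. vsub (X m) x \<in> l2 \<and> l2norm (vsub (X m) x) \<le> e/2" using main[of "e/2"] e by auto
    show "\<exists>N. \<forall>k\<ge>N. \<bar>l2norm (vsub (X k) x)\<bar> < e"
    proof (intro exI allI impI)
      fix k assume "N \<le> k"
      hence "l2norm (vsub (X k) x) \<le> e/2" "vsub (X k) x \<in> l2" using N by auto
      thus "\<bar>l2norm (vsub (X k) x)\<bar> < e" using e by simp
    qed
  qed
  thus ?thesis using xin by blast
qed


lemma parallelogram: "a \<in> l2 \<Longrightarrow> b \<in> l2 \<Longrightarrow>
  (l2norm (vadd a b))^2 + (l2norm (vsub a b))^2 = 2 * (l2norm a)^2 + 2 * (l2norm b)^2"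
  by (simp add: nsq_vadd nsq_vsub)

lemma projection:
  assumes M: "subsp M" and h: "h \<in> l2"
  shows "\<exists>p\<in>l2. (\<exists>X. (\<forall>k. X k \<in> M) \<and> lconv X p) \<and> (\<forall>m\<in>M. ip (vsub h p) m = 0)"
proof -
  have Ml2: "m \<in> M \<Longrightarrow> m \<in> l2" for m using M by (auto simp: subsp_def)
  have M0: "vzero \<in> M" and Madd: "\<And>x y. x \<in> M \<Longrightarrow> y \<in> M \<Longrightarrow> vadd x y \<in> M"
    and Msc: "\<And>c x. x \<in> M \<Longrightarrow> vsc c x \<in> M" using M by (auto simp: subsp_def)
  define D where "D = (\<lambda>m. l2norm (vsub h m)) ` M"
  define d where "d = Inf D"
  have Dne: "D \<noteq> {}" using M0 by (auto simp: D_def)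
  have Dbdd: "bdd_below D" unfolding D_def bdd_below_def using h Ml2 by (intro exI[of _ 0]) auto
  have dle: "d \<le> l2norm (vsub h m)" if "m \<in> M" for m
    unfolding d_def using Dbdd that by (intro cInf_lower) (auto simp: D_def)
  have d0: "0 \<le> d" unfolding d_def using Dne h Ml2 by (intro cInf_greatest) (auto simp: D_def)
  have "\<exists>m\<in>M. l2norm (vsub h m) < d + 1 / (real k + 1)" for k
  proof -
    have "Inf D < d + 1 / (real k + 1)" unfolding d_def by (simp add: add_pos_pos)
    then obtain y where "y \<in> D" "y < d + 1 / (real k + 1)" using cInf_lessD[OF Dne] by blast
    thus ?thesis by (auto simp: D_def)
  qed
  then obtain X where X: "\<And>k. X k \<in> M" and Xd: "\<And>k. l2norm (vsub h (X k)) < d + 1 / (real k + 1)"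
    by metis
  have Xl2: "X k \<in> l2" for k using X Ml2 by blast
  define c where "c = 2 * d + 1"
  have c0: "c > 0" using d0 by (simp add: c_def)
  have Xsq: "(l2norm (vsub h (X k)))^2 \<le> d^2 + c / (real k + 1)" for k
  proof -
    define \<delta> where "\<delta> = 1 / (real k + 1)"
    have \<delta>: "0 < \<delta>" "\<delta> \<le> 1" by (auto simp: \<delta>_def field_simps)
    have "(l2norm (vsub h (X k)))^2 \<le> (d + \<delta>)^2"
      using Xd[of k] h Xl2 by (intro power_mono) (auto simp: \<delta>_def)
    also have "\<dots> = d^2 + (2 * d + \<delta>) * \<delta>" by (simp add: power2_eq_square algebra_simps)
    also have "\<dots> \<le> d^2 + c * \<delta>" using \<delta> d0 unfolding c_def by (intro add_left_mono mult_right_mono) auto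
    finally show ?thesis by (simp add: \<delta>_def)
  qed
  have par: "(l2norm (vsub (X n) (X m)))^2 \<le> 2 * c / (real m + 1) + 2 * c / (real n + 1)" for m n
  proof -
    define a where "a = vsub h (X m)"
    define b where "b = vsub h (X n)"
    have ab: "a \<in> l2" "b \<in> l2" using h Xl2 by (auto simp: a_def b_def)
    define mid where "mid = vsc (1/2) (vadd (X m) (X n))"
    have mid: "mid \<in> M" unfolding mid_def using X by (intro Msc Madd)
    have "vadd a b = vsc 2 (vsub h mid)" by (simp add: a_def b_def mid_def fun_eq_iff vapp algebra_simps)
    hence "l2norm (vadd a b) = 2 * l2norm (vsub h mid)" using h mid Ml2 by (simp add: l2norm_vsc)
    hence "(l2norm (vadd a b))^2 \<ge> 4 * d^2"
      using dle[OF mid] d0 by (simp add: power_mult_distrib power_mono)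
    moreover have "vsub a b = vsub (X n) (X m)" by (simp add: a_def b_def fun_eq_iff vapp)
    hence "(l2norm (vadd a b))^2 + (l2norm (vsub (X n) (X m)))^2 = 2 * (l2norm a)^2 + 2 * (l2norm b)^2"
      using parallelogram[OF ab] by simp
    ultimately have "(l2norm (vsub (X n) (X m)))^2 \<le> 2 * (l2norm a)^2 + 2 * (l2norm b)^2 - 4 * d^2"
      by linarith
    also have "\<dots> \<le> 2 * (d^2 + c / (real m + 1)) + 2 * (d^2 + c / (real n + 1)) - 4 * d^2"
      using Xsq[of m] Xsq[of n] unfolding a_def b_def by (intro diff_right_mono add_mono mult_left_mono) auto
    finally show ?thesis by simp
  qed
  have cauchy: "\<exists>N. \<forall>m\<ge>N. \<forall>n\<ge>N. l2norm (vsub (X m) (X n)) < e" if e: "e > 0" for e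
  proof -
    obtain N :: nat where N: "4 * c / e^2 < real N" using reals_Archimedean2 by blast
    show ?thesis
    proof (intro exI allI impI)
      fix m n assume mn: "N \<le> m" "N \<le> n"
      have "4 * c / e^2 < real N + 1" using N by simp
      hence Nb: "4 * c / (real N + 1) < e^2" using e c0
        by (simp add: divide_less_eq field_simps)
      have "2 * c / (real n + 1) \<le> 2 * c / (real N + 1)" using mn c0
        by (intro divide_left_mono) auto
      moreover have "2 * c / (real m + 1) \<le> 2 * c / (real N + 1)" using mn c0
        by (intro divide_left_mono) auto
      moreover have "4 * c / (real N + 1) = 2 * c / (real N + 1) + 2 * c / (real N + 1)" by simp
      ultimately have "(l2norm (vsub (X m) (X n)))^2 < e^2" using par[of m n] Nb by linarith
      thus "l2norm (vsub (X m) (X n)) < e" using e Xl2 by (simp add: power_less_imp_less_base)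
    qed
  qed
  obtain p where p: "p \<in> l2" "lconv X p" using l2_complete[OF Xl2 cauchy] by blast
  have Xp: "(\<lambda>k. l2norm (vsub (X k) p)) \<longlonglongrightarrow> 0" using p by (simp add: lconv_def)
  have Xp': "(\<lambda>k. l2norm (vsub p (X k))) \<longlonglongrightarrow> 0" using Xp p Xl2 by (simp add: l2norm_sub_comm)
  define w where "w = vsub h p"
  have w: "w \<in> l2" using h p by (simp add: w_def)
  have wd: "l2norm w \<le> d"
  proof -
    have i0: "(\<lambda>k. 1 / (real k + 1)) \<longlonglongrightarrow> 0"
      using LIMSEQ_inverse_real_of_nat by (simp add: inverse_eq_divide add.commute)
    have lim: "(\<lambda>k. d + 1 / (real k + 1) + l2norm (vsub (X k) p)) \<longlonglongrightarrow> d + 0 + 0"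
      by (intro tendsto_add tendsto_const Xp i0)
    have bnd: "l2norm w \<le> d + 1 / (real k + 1) + l2norm (vsub (X k) p)" for k
    proof -
      have "l2norm w \<le> l2norm (vsub h (X k)) + l2norm (vsub (X k) p)"
        unfolding w_def using h Xl2[of k] p(1) by (rule l2norm_tri_sub)
      thus ?thesis using Xd[of k] by linarith
    qed
    have "l2norm w \<le> d + 0 + 0" by (rule LIMSEQ_le_const[OF lim]) (use bnd in auto)
    thus ?thesis by simp
  qed
  have wt: "d \<le> l2norm (vsub w (vsc t m))" if m: "m \<in> M" for m t
  proof -
    have mm: "m \<in> l2" using m Ml2 by blast
    have bound: "d - l2norm (vsub p (X k)) \<le> l2norm (vsub w (vsc t m))" for k
    proof -
      have "vadd (X k) (vsc t m) \<in> M" using X m by (intro Madd Msc)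
      hence "d \<le> l2norm (vsub h (vadd (X k) (vsc t m)))" by (rule dle)
      also have "vsub h (vadd (X k) (vsc t m)) = vadd (vsub w (vsc t m)) (vsub p (X k))"
        by (simp add: w_def fun_eq_iff vapp)
      also have "l2norm \<dots> \<le> l2norm (vsub w (vsc t m)) + l2norm (vsub p (X k))"
        using w mm p Xl2 by (intro l2norm_triangle) auto
      finally show ?thesis by linarith
    qed
    have lim: "(\<lambda>k. d - l2norm (vsub p (X k))) \<longlonglongrightarrow> d - 0" by (intro tendsto_diff tendsto_const Xp')
    have "d - 0 \<le> l2norm (vsub w (vsc t m))" by (rule LIMSEQ_le_const2[OF lim]) (use bound in auto)
    thus ?thesis by simp
  qed
  have orth: "ip w m = 0" if m: "m \<in> M" for m
  proof -
    have mm: "m \<in> l2" using m Ml2 by blast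
    define q where "q = ip w m"
    define n where "n = (l2norm m)^2"
    have n0: "0 \<le> n" by (simp add: n_def)
    define s where "s = 1 / (n + 1)"
    have s0: "0 < s" using n0 by (simp add: s_def)
    have sn: "s * n \<le> 1" using n0 by (simp add: s_def field_simps)
    define t where "t = complex_of_real s * q"
    have "(l2norm w)^2 \<le> (l2norm (vsub w (vsc t m)))^2"
      using wd wt[OF m, of t] w by (intro power_mono) auto
    also have "\<dots> = (l2norm w)^2 - 2 * Re (ip w (vsc t m)) + (cmod t)^2 * n"
      using w mm by (simp add: nsq_vsub nsq_vsc n_def)
    also have "ip w (vsc t m) = complex_of_real s * (cnj q * q)"
      using w mm by (simp add: ip_vsc2 t_def q_def)
    also have "cnj q * q = complex_of_real ((cmod q)^2)" using complex_norm_square[of q] by (simp add: mult.commute)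
    also have "(cmod t)^2 = s^2 * (cmod q)^2" using s0 by (simp add: t_def norm_mult power_mult_distrib)
    finally have ineq: "0 \<le> - 2 * s * (cmod q)^2 + s^2 * (cmod q)^2 * n" by simp
    have Q0: "0 \<le> (cmod q)^2" by simp
    have "s^2 * (cmod q)^2 * n = s * (cmod q)^2 * (s * n)" by (simp add: power2_eq_square)
    also have "\<dots> \<le> s * (cmod q)^2" using sn s0 Q0 by (simp add: mult_left_le)
    finally have "0 \<le> - s * (cmod q)^2" using ineq by linarith
    hence "(cmod q)^2 \<le> 0" using s0 by (simp add: mult_le_0_iff)
    thus ?thesis unfolding q_def by simp
  qed
  show ?thesis using p X orth unfolding w_def by blast
qed


definition pl2 :: "vec \<times> vec \<Rightarrow> bool" where "pl2 a \<longleftrightarrow> fst a \<in> l2 \<and> snd a \<in> l2"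
definition pdiff :: "vec \<times> vec \<Rightarrow> vec \<times> vec \<Rightarrow> vec \<times> vec" where
  "pdiff a b = (vsub (fst a) (fst b), vsub (snd a) (snd b))"
definition swp :: "vec \<times> vec \<Rightarrow> vec \<times> vec" where "swp a = (snd a, fst a)"

lemma pdiff_eq: "pdiff a b = padd a (psc (-1) b)"
  by (simp add: pdiff_def padd_def psc_def fun_eq_iff vapp)

lemma pl2_padd: "pl2 a \<Longrightarrow> pl2 b \<Longrightarrow> pl2 (padd a b)" by (simp add: pl2_def padd_def)
lemma pl2_psc: "pl2 a \<Longrightarrow> pl2 (psc c a)" by (simp add: pl2_def psc_def)
lemma pl2_pdiff: "pl2 a \<Longrightarrow> pl2 b \<Longrightarrow> pl2 (pdiff a b)" by (simp add: pl2_def pdiff_def)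

lemma sform_padd1: "pl2 a \<Longrightarrow> pl2 b \<Longrightarrow> pl2 c \<Longrightarrow> sform (padd a b) c = sform a c + sform b c"
  by (simp add: pl2_def sform_def padd_def ip_vadd1 algebra_simps)
lemma sform_psc1: "pl2 a \<Longrightarrow> pl2 c \<Longrightarrow> sform (psc k a) c = k * sform a c"
  by (simp add: pl2_def sform_def psc_def ip_vsc1 algebra_simps)
lemma sform_pdiff1: "pl2 a \<Longrightarrow> pl2 b \<Longrightarrow> pl2 c \<Longrightarrow> sform (pdiff a b) c = sform a c - sform b c"
  by (simp add: pl2_def sform_def pdiff_def ip_vsub1 algebra_simps)
lemma sform_swp: "sform (swp a) (swp b) = - sform a b"
  by (simp add: sform_def swp_def)
lemma sform_cnj: "pl2 a \<Longrightarrow> pl2 b \<Longrightarrow> sform b a = - cnj (sform a b)"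
  by (simp add: sform_def pl2_def ip_cnj[of "fst a" "fst b"] ip_cnj[of "snd a" "snd b"])

lemma sperp_iff: "a \<in> sperp A \<longleftrightarrow> pl2 a \<and> (\<forall>b\<in>A. sform a b = 0)"
  by (simp add: sperp_def pl2_def)

lemma sperp_padd: "\<forall>b\<in>A. pl2 b \<Longrightarrow> a \<in> sperp A \<Longrightarrow> b \<in> sperp A \<Longrightarrow> padd a b \<in> sperp A"
  by (simp add: sperp_iff pl2_padd sform_padd1)
lemma sperp_psc: "\<forall>b\<in>A. pl2 b \<Longrightarrow> a \<in> sperp A \<Longrightarrow> psc c a \<in> sperp A"
  by (simp add: sperp_iff pl2_psc sform_psc1)
lemma sperp_pdiff: "\<forall>b\<in>A. pl2 b \<Longrightarrow> a \<in> sperp A \<Longrightarrow> b \<in> sperp A \<Longrightarrow> pdiff a b \<in> sperp A"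
  by (simp add: sperp_iff pl2_pdiff sform_pdiff1)
lemma sperp_zero: "(vzero, vzero) \<in> sperp A"
  by (simp add: sperp_iff pl2_def sform_def)

lemma swp_swp[simp]: "swp (swp a) = a" by (simp add: swp_def)
lemma pl2_swp[simp]: "pl2 (swp a) = pl2 a" by (auto simp: pl2_def swp_def)
lemma mem_swp_image: "a \<in> swp ` X \<longleftrightarrow> swp a \<in> X"
proof
  assume "a \<in> swp ` X" then obtain b where "b \<in> X" "a = swp b" by auto
  thus "swp a \<in> X" by simp
next
  assume "swp a \<in> X" hence "swp (swp a) \<in> swp ` X" by blast
  thus "a \<in> swp ` X" by simp
qed

lemma sperp_swp: "sperp (swp ` A) = swp ` sperp A"
proof -
  have "a \<in> sperp (swp ` A) \<longleftrightarrow> swp a \<in> sperp A" for a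
  proof -
    have "(\<forall>b\<in>swp ` A. sform a b = 0) \<longleftrightarrow> (\<forall>b\<in>A. sform (swp a) b = 0)"
    proof
      assume h: "\<forall>b\<in>swp ` A. sform a b = 0"
      show "\<forall>b\<in>A. sform (swp a) b = 0"
      proof
        fix b assume "b \<in> A" hence "sform a (swp b) = 0" using h by blast
        thus "sform (swp a) b = 0" using sform_swp[of "swp a" b] by simp
      qed
    next
      assume h: "\<forall>b\<in>A. sform (swp a) b = 0"
      show "\<forall>b\<in>swp ` A. sform a b = 0"
      proof
        fix b assume "b \<in> swp ` A" then obtain b' where "b' \<in> A" "b = swp b'" by auto
        thus "sform a b = 0" using h sform_swp[of "swp a" b'] by simp
      qed
    qed
    thus ?thesis by (simp add: sperp_iff)
  qed
  thus ?thesis unfolding set_eq_iff mem_swp_image by blast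
qed
lemma padd_swp: "padd (swp a) (swp b) = swp (padd a b)" by (simp add: padd_def swp_def)
lemma psc_swp: "psc c (swp a) = swp (psc c a)" by (simp add: psc_def swp_def)

definition bq :: "(vec \<times> vec) set \<Rightarrow> vec set \<Rightarrow> vec set \<Rightarrow> (vec \<times> vec \<Rightarrow> vec) \<Rightarrow> (vec \<times> vec \<Rightarrow> vec) \<Rightarrow> bool" where
  "bq A Hp Hm Gp Gm \<longleftrightarrow>
     closed_subspace Hp \<and> closed_subspace Hm \<and>
     (\<forall>a\<in>sperp A. Gp a \<in> Hp \<and> Gm a \<in> Hm) \<and>
     (\<forall>a\<in>sperp A. \<forall>b\<in>sperp A.
        Gp (padd a b) = vadd (Gp a) (Gp b) \<and> Gm (padd a b) = vadd (Gm a) (Gm b)) \<and>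
     (\<forall>c. \<forall>a\<in>sperp A. Gp (psc c a) = vsc c (Gp a) \<and> Gm (psc c a) = vsc c (Gm a)) \<and>
     (\<exists>C. \<forall>a\<in>sperp A.
        (l2norm (Gp a))^2 + (l2norm (Gm a))^2 \<le> C * ((l2norm (fst a))^2 + (l2norm (snd a))^2)) \<and>
     (\<forall>x\<in>Hp. \<forall>y\<in>Hm. \<exists>a\<in>sperp A. Gp a = x \<and> Gm a = y) \<and>
     {a \<in> sperp A. Gp a = vzero \<and> Gm a = vzero} = A \<and>
     (\<forall>a\<in>sperp A. \<forall>b\<in>sperp A.
        sform a b = \<i> * ip (Gp a) (Gp b) - \<i> * ip (Gm a) (Gm b))"

lemma bq_quad: "boundary_quadruple T Hp Hm Gp Gm \<longleftrightarrow> bq (A_T T) Hp Hm Gp Gm"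
  by (simp add: boundary_quadruple_def bq_def)

lemma bq_swp: assumes bq: "bq A Hp Hm Gp Gm" shows "bq (swp ` A) Hm Hp (Gm \<circ> swp) (Gp \<circ> swp)"
proof -
  have mS: "a \<in> sperp (swp ` A) \<longleftrightarrow> swp a \<in> sperp A" for a
    by (simp add: sperp_swp mem_swp_image)
  note B = bq[unfolded bq_def]
  have c1: "closed_subspace Hm" "closed_subspace Hp" using B by auto
  have c2: "\<forall>a\<in>sperp (swp ` A). (Gm \<circ> swp) a \<in> Hm \<and> (Gp \<circ> swp) a \<in> Hp"
    using B by (auto simp: mS)
  have c3: "\<forall>a\<in>sperp (swp ` A). \<forall>b\<in>sperp (swp ` A).
        (Gm \<circ> swp) (padd a b) = vadd ((Gm \<circ> swp) a) ((Gm \<circ> swp) b) \<and>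
        (Gp \<circ> swp) (padd a b) = vadd ((Gp \<circ> swp) a) ((Gp \<circ> swp) b)"
  proof (intro ballI)
    fix a b assume "a \<in> sperp (swp ` A)" "b \<in> sperp (swp ` A)"
    hence "swp a \<in> sperp A" "swp b \<in> sperp A" by (auto simp: mS)
    thus "(Gm \<circ> swp) (padd a b) = vadd ((Gm \<circ> swp) a) ((Gm \<circ> swp) b) \<and>
        (Gp \<circ> swp) (padd a b) = vadd ((Gp \<circ> swp) a) ((Gp \<circ> swp) b)"
    proof -
      have add: "\<forall>a\<in>sperp A. \<forall>b\<in>sperp A.
        Gp (padd a b) = vadd (Gp a) (Gp b) \<and> Gm (padd a b) = vadd (Gm a) (Gm b)" using B by blast
      have e: "swp (padd a b) = padd (swp a) (swp b)" by (simp add: padd_swp)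
      show ?thesis unfolding o_def e using add \<open>swp a \<in> sperp A\<close> \<open>swp b \<in> sperp A\<close> by blast
    qed
  qed
  have c4: "\<forall>c. \<forall>a\<in>sperp (swp ` A). (Gm \<circ> swp) (psc c a) = vsc c ((Gm \<circ> swp) a) \<and>
        (Gp \<circ> swp) (psc c a) = vsc c ((Gp \<circ> swp) a)"
  proof (intro allI ballI)
    fix c a assume "a \<in> sperp (swp ` A)"
    hence "swp a \<in> sperp A" by (auto simp: mS)
    thus "(Gm \<circ> swp) (psc c a) = vsc c ((Gm \<circ> swp) a) \<and>
        (Gp \<circ> swp) (psc c a) = vsc c ((Gp \<circ> swp) a)"
    proof -
      have sc: "\<forall>c. \<forall>a\<in>sperp A. Gp (psc c a) = vsc c (Gp a) \<and> Gm (psc c a) = vsc c (Gm a)" using B by blast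
      have e: "swp (psc c a) = psc c (swp a)" by (simp add: psc_swp)
      show ?thesis unfolding o_def e using sc \<open>swp a \<in> sperp A\<close> by blast
    qed
  qed
  obtain C where C: "\<forall>a\<in>sperp A.
        (l2norm (Gp a))^2 + (l2norm (Gm a))^2 \<le> C * ((l2norm (fst a))^2 + (l2norm (snd a))^2)"
    using B by blast
  have c5: "\<exists>C. \<forall>a\<in>sperp (swp ` A).
        (l2norm ((Gm \<circ> swp) a))^2 + (l2norm ((Gp \<circ> swp) a))^2 \<le> C * ((l2norm (fst a))^2 + (l2norm (snd a))^2)"
  proof (intro exI ballI)
    fix a assume "a \<in> sperp (swp ` A)"
    hence "swp a \<in> sperp A" by (auto simp: mS)
    thus "(l2norm ((Gm \<circ> swp) a))^2 + (l2norm ((Gp \<circ> swp) a))^2 \<le> C * ((l2norm (fst a))^2 + (l2norm (snd a))^2)"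
      using C by (auto simp: swp_def add.commute)
  qed
  have c6: "\<forall>x\<in>Hm. \<forall>y\<in>Hp. \<exists>a\<in>sperp (swp ` A). (Gm \<circ> swp) a = x \<and> (Gp \<circ> swp) a = y"
  proof (intro ballI)
    fix x y assume "x \<in> Hm" "y \<in> Hp"
    then obtain a where "a \<in> sperp A" "Gp a = y" "Gm a = x" using B by blast
    thus "\<exists>a\<in>sperp (swp ` A). (Gm \<circ> swp) a = x \<and> (Gp \<circ> swp) a = y"
      by (intro bexI[of _ "swp a"]) (auto simp: mS)
  qed
  have Aeq: "A = {a \<in> sperp A. Gp a = vzero \<and> Gm a = vzero}" using B by simp
  have c7: "{a \<in> sperp (swp ` A). (Gm \<circ> swp) a = vzero \<and> (Gp \<circ> swp) a = vzero} = swp ` A"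
  proof -
    have "a \<in> swp ` A \<longleftrightarrow> swp a \<in> A" for a by (rule mem_swp_image)
    also have "\<dots> a \<longleftrightarrow> swp a \<in> sperp A \<and> Gp (swp a) = vzero \<and> Gm (swp a) = vzero" for a
      by (subst Aeq) simp
    finally show ?thesis by (auto simp: mS)
  qed
  have c8: "\<forall>a\<in>sperp (swp ` A). \<forall>b\<in>sperp (swp ` A).
        sform a b = \<i> * ip ((Gm \<circ> swp) a) ((Gm \<circ> swp) b) - \<i> * ip ((Gp \<circ> swp) a) ((Gp \<circ> swp) b)"
  proof (intro ballI)
    fix a b assume "a \<in> sperp (swp ` A)" "b \<in> sperp (swp ` A)"
    hence ab: "swp a \<in> sperp A" "swp b \<in> sperp A" by (auto simp: mS)
    have "sform a b = - sform (swp a) (swp b)" by (simp add: sform_swp)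
    also have "\<dots> = - (\<i> * ip (Gp (swp a)) (Gp (swp b)) - \<i> * ip (Gm (swp a)) (Gm (swp b)))"
      using B ab by simp
    finally show "sform a b = \<i> * ip ((Gm \<circ> swp) a) ((Gm \<circ> swp) b) - \<i> * ip ((Gp \<circ> swp) a) ((Gp \<circ> swp) b)"
      by simp
  qed
  show ?thesis unfolding bq_def using c1 c2 c3 c4 c5 c6 c7 c8 by blast
qed


lemma lconv_zero_iff: "lconv X p \<longleftrightarrow> (\<lambda>k. l2norm (vsub (X k) p)) \<longlonglongrightarrow> 0" by (simp add: lconv_def)

lemma lconv_bound:
  assumes "lconv X p" and "\<And>k. l2norm (vsub (Y k) q) \<le> K * l2norm (vsub (X k) p)"
    and "\<And>k. Y k \<in> l2" "q \<in> l2"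
  shows "lconv Y q"
proof -
  have "(\<lambda>k. K * l2norm (vsub (X k) p)) \<longlonglongrightarrow> K * 0"
    using assms(1) by (intro tendsto_mult tendsto_const) (simp add: lconv_def)
  hence t: "(\<lambda>k. K * l2norm (vsub (X k) p)) \<longlonglongrightarrow> 0" by simp
  show ?thesis unfolding lconv_def
    by (rule Lim_null_comparison[OF _ t]) (use assms in \<open>auto intro!: always_eventually\<close>)
qed

lemma lconv_unique:
  assumes "\<And>k. X k \<in> l2" "p \<in> l2" "q \<in> l2" "lconv X p" "lconv X q" shows "p = q"
proof -
  have a: "(\<lambda>k. l2norm (vsub p (X k)) + l2norm (vsub (X k) q)) \<longlonglongrightarrow> 0 + 0"
    using assms by (intro tendsto_add) (simp_all add: lconv_def l2norm_sub_comm)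
  have "l2norm (vsub p q) \<le> l2norm (vsub p (X k)) + l2norm (vsub (X k) q)" for k
    using assms by (intro l2norm_tri_sub) auto
  hence "l2norm (vsub p q) \<le> 0 + 0" by (intro LIMSEQ_le_const[OF a]) auto
  hence "l2norm (vsub p q) = 0" using assms by (simp add: order_antisym)
  hence "vsub p q = vzero" using assms by (intro l2norm_zero) auto
  thus ?thesis by (simp add: vsub_eq_vzero)
qed

lemma lconv_cauchy:
  assumes "\<And>k. X k \<in> l2" "p \<in> l2" "lconv X p" "e > 0"
  shows "\<exists>N. \<forall>m\<ge>N. \<forall>n\<ge>N. l2norm (vsub (X m) (X n)) < e"
proof -
  obtain N where N: "\<forall>k\<ge>N. \<bar>l2norm (vsub (X k) p)\<bar> < e/2" using assms(3,4) unfolding lconv_iff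
    by (meson half_gt_zero)
  show ?thesis
  proof (intro exI allI impI)
    fix m n assume mn: "N \<le> m" "N \<le> n"
    have "l2norm (vsub (X m) (X n)) \<le> l2norm (vsub (X m) p) + l2norm (vsub p (X n))"
      using assms by (intro l2norm_tri_sub) auto
    also have "l2norm (vsub p (X n)) = l2norm (vsub (X n) p)" using assms by (simp add: l2norm_sub_comm)
    finally have "l2norm (vsub (X m) (X n)) \<le> l2norm (vsub (X m) p) + l2norm (vsub (X n) p)" .
    moreover have "\<bar>l2norm (vsub (X m) p)\<bar> < e/2" using N mn(1) by blast
    moreover have "\<bar>l2norm (vsub (X n) p)\<bar> < e/2" using N mn(2) by blast
    ultimately show "l2norm (vsub (X m) (X n)) < e" by linarith
  qed
qed

lemma lconv_sub:
  assumes "\<And>k. X k \<in> l2" "\<And>k. Y k \<in> l2" "p \<in> l2" "q \<in> l2" "lconv X p" "lconv Y q"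
  shows "lconv (\<lambda>k. vsub (X k) (Y k)) (vsub p q)"
proof -
  have t: "(\<lambda>k. l2norm (vsub (X k) p) + l2norm (vsub (Y k) q)) \<longlonglongrightarrow> 0 + 0"
    using assms by (intro tendsto_add) (simp_all add: lconv_def)
  have "vsub (vsub (X k) (Y k)) (vsub p q) = vadd (vsub (X k) p) (vsc (-1) (vsub (Y k) q))" for k
    by (simp add: fun_eq_iff vapp)
  hence "l2norm (vsub (vsub (X k) (Y k)) (vsub p q)) \<le> l2norm (vsub (X k) p) + l2norm (vsub (Y k) q)" for k
    using assms l2norm_triangle[of "vsub (X k) p" "vsc (-1) (vsub (Y k) q)"] by (simp add: l2norm_vsc)
  thus ?thesis unfolding lconv_def
    by (intro Lim_null_comparison[OF _ t[simplified]]) (use assms in \<open>auto intro!: always_eventually\<close>)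
qed

lemma lconv_sc:
  assumes "\<And>k. X k \<in> l2" "p \<in> l2" "lconv X p"
  shows "lconv (\<lambda>k. vsc c (X k)) (vsc c p)"
proof -
  have "vsub (vsc c (X k)) (vsc c p) = vsc c (vsub (X k) p)" for k by (simp add: fun_eq_iff vapp algebra_simps)
  hence bnd: "l2norm (vsub (vsc c (X k)) (vsc c p)) \<le> cmod c * l2norm (vsub (X k) p)" for k
    using assms by (simp add: l2norm_vsc)
  have "vsc c (X k) \<in> l2" for k using assms(1) by simp
  moreover have "vsc c p \<in> l2" using assms(2) by simp
  ultimately show ?thesis by (rule lconv_bound[OF assms(3) bnd])
qed

lemma ip_cont1:
  assumes "\<And>k. X k \<in> l2" "x \<in> l2" "y \<in> l2" "lconv X x"
  shows "(\<lambda>k. ip (X k) y) \<longlonglongrightarrow> ip x y"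
proof -
  have t: "(\<lambda>k. l2norm (vsub (X k) x) * l2norm y) \<longlonglongrightarrow> 0 * l2norm y"
    using assms by (intro tendsto_mult tendsto_const) (simp add: lconv_def)
  have b: "norm (ip (X k) y - ip x y) \<le> l2norm (vsub (X k) x) * l2norm y" for k
  proof -
    have "ip (X k) y - ip x y = ip (vsub (X k) x) y" using assms(1-3) by (simp add: ip_vsub1)
    thus ?thesis using cauchy_schwarz[of "vsub (X k) x" y] assms(1-3) by simp
  qed
  have t0: "(\<lambda>k. l2norm (vsub (X k) x) * l2norm y) \<longlonglongrightarrow> 0" using t by simp
  have "(\<lambda>k. ip (X k) y - ip x y) \<longlonglongrightarrow> 0"
    by (rule Lim_null_comparison[OF _ t0]) (rule always_eventually, rule allI, rule b)
  thus ?thesis by (rule LIM_zero_cancel)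
qed

lemma ip_cont2:
  assumes "\<And>k. X k \<in> l2" "x \<in> l2" "y \<in> l2" "lconv X x"
  shows "(\<lambda>k. ip y (X k)) \<longlonglongrightarrow> ip y x"
proof -
  have "(\<lambda>k. cnj (ip (X k) y)) \<longlonglongrightarrow> cnj (ip x y)" using ip_cont1[OF assms] by (rule tendsto_cnj)
  moreover have "ip y (X k) = cnj (ip (X k) y)" for k using assms(1,3) by (rule ip_cnj)
  moreover have "ip y x = cnj (ip x y)" using assms(2,3) by (rule ip_cnj)
  ultimately show ?thesis by simp
qed

lemma closed_subspace_l2: "closed_subspace H \<Longrightarrow> x \<in> H \<Longrightarrow> x \<in> l2"
  by (auto simp: closed_subspace_def)
lemma closed_subspace_vsub: "closed_subspace H \<Longrightarrow> x \<in> H \<Longrightarrow> y \<in> H \<Longrightarrow> vsub x y \<in> H"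
  unfolding closed_subspace_def vsub_eq by blast
lemma closed_subspace_vadd: "closed_subspace H \<Longrightarrow> x \<in> H \<Longrightarrow> y \<in> H \<Longrightarrow> vadd x y \<in> H"
  unfolding closed_subspace_def by blast
lemma closed_subspace_vsc: "closed_subspace H \<Longrightarrow> x \<in> H \<Longrightarrow> vsc c x \<in> H"
  unfolding closed_subspace_def by blast
lemma closed_subspace_vzero: "closed_subspace H \<Longrightarrow> vzero \<in> H"
  unfolding closed_subspace_def by blast
lemma closed_subspace_subsp: "closed_subspace H \<Longrightarrow> subsp H"
  unfolding closed_subspace_def subsp_def by blast

lemma ip_zero_all: "closed_subspace H \<Longrightarrow> w \<in> H \<Longrightarrow> (\<forall>y\<in>H. ip w y = 0) \<Longrightarrow> w = vzero"
  using ip_self_zero closed_subspace_l2 by blast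


definition NP :: "(vec \<times> vec) set \<Rightarrow> complex \<Rightarrow> (vec \<times> vec) set" where
  "NP A c = {(x, vsc c x) | x. x \<in> l2} \<inter> sperp A"

locale bql =
  fixes A :: "(vec \<times> vec) set" and H1 H2 :: "vec set" and G1 G2 :: "vec \<times> vec \<Rightarrow> vec"
  assumes bq: "bq A H1 H2 G1 G2"
begin

lemma H1: "closed_subspace H1" and H2: "closed_subspace H2"
  using bq by (auto simp: bq_def)
lemma Gin: "a \<in> sperp A \<Longrightarrow> G1 a \<in> H1" "a \<in> sperp A \<Longrightarrow> G2 a \<in> H2"
  using bq by (auto simp: bq_def)
lemma Gl2: "a \<in> sperp A \<Longrightarrow> G1 a \<in> l2" "a \<in> sperp A \<Longrightarrow> G2 a \<in> l2"
  using Gin H1 H2 closed_subspace_l2 by blast+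
lemma Gadd: "a \<in> sperp A \<Longrightarrow> b \<in> sperp A \<Longrightarrow> G1 (padd a b) = vadd (G1 a) (G1 b)"
  "a \<in> sperp A \<Longrightarrow> b \<in> sperp A \<Longrightarrow> G2 (padd a b) = vadd (G2 a) (G2 b)"
  using bq by (auto simp: bq_def)
lemma Gsc: "a \<in> sperp A \<Longrightarrow> G1 (psc c a) = vsc c (G1 a)" "a \<in> sperp A \<Longrightarrow> G2 (psc c a) = vsc c (G2 a)"
  using bq by (auto simp: bq_def)
lemma Gbnd: "\<exists>C. \<forall>a\<in>sperp A. (l2norm (G1 a))^2 + (l2norm (G2 a))^2 \<le> C * ((l2norm (fst a))^2 + (l2norm (snd a))^2)"
  using bq by (simp add: bq_def)
lemma Gonto: "x \<in> H1 \<Longrightarrow> y \<in> H2 \<Longrightarrow> \<exists>a\<in>sperp A. G1 a = x \<and> G2 a = y"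
  using bq by (simp add: bq_def)
lemma Aeq: "{a \<in> sperp A. G1 a = vzero \<and> G2 a = vzero} = A"
  using bq by (simp add: bq_def)
lemma green: "a \<in> sperp A \<Longrightarrow> b \<in> sperp A \<Longrightarrow> sform a b = \<i> * ip (G1 a) (G1 b) - \<i> * ip (G2 a) (G2 b)"
  using bq by (simp add: bq_def)

lemma A_S: "a \<in> A \<Longrightarrow> a \<in> sperp A" and A_G: "a \<in> A \<Longrightarrow> G1 a = vzero" "a \<in> A \<Longrightarrow> G2 a = vzero"
  using Aeq by blast+
lemma A_iff: "a \<in> A \<longleftrightarrow> a \<in> sperp A \<and> G1 a = vzero \<and> G2 a = vzero"
  using Aeq by blast
lemma S_pl2: "a \<in> sperp A \<Longrightarrow> pl2 a" by (simp add: sperp_iff)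
lemma A_pl2: "\<forall>b\<in>A. pl2 b" using A_S S_pl2 by blast

lemma S_pdiff: "a \<in> sperp A \<Longrightarrow> b \<in> sperp A \<Longrightarrow> pdiff a b \<in> sperp A"
  using sperp_pdiff A_pl2 by blast
lemma S_padd: "a \<in> sperp A \<Longrightarrow> b \<in> sperp A \<Longrightarrow> padd a b \<in> sperp A"
  using sperp_padd A_pl2 by blast
lemma S_psc: "a \<in> sperp A \<Longrightarrow> psc c a \<in> sperp A"
  using sperp_psc A_pl2 by blast

lemma Gdiff: "a \<in> sperp A \<Longrightarrow> b \<in> sperp A \<Longrightarrow> G1 (pdiff a b) = vsub (G1 a) (G1 b)"
  "a \<in> sperp A \<Longrightarrow> b \<in> sperp A \<Longrightarrow> G2 (pdiff a b) = vsub (G2 a) (G2 b)"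
  by (simp_all add: pdiff_eq Gadd Gsc S_psc vsub_eq)

lemma A_pdiff: "a \<in> A \<Longrightarrow> b \<in> A \<Longrightarrow> pdiff a b \<in> A"
  using A_iff S_pdiff Gdiff by (simp add: vsub_eq_vzero)
lemma A_padd: "a \<in> A \<Longrightarrow> b \<in> A \<Longrightarrow> padd a b \<in> A"
  using A_iff S_padd Gadd by (simp add: fun_eq_iff vapp)
lemma A_psc: "a \<in> A \<Longrightarrow> psc c a \<in> A"
  using A_iff S_psc Gsc by (simp add: fun_eq_iff vapp)

lemma A_norm: assumes "a \<in> A" shows "l2norm (fst a) = l2norm (snd a)"
proof -
  have a: "a \<in> sperp A" "pl2 a" using assms A_S S_pl2 by auto
  have "sform a a = 0" using green[OF a(1) a(1)] A_G[OF assms] by simp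
  hence "ip (fst a) (fst a) = ip (snd a) (snd a)" by (simp add: sform_def)
  hence "(l2norm (fst a))^2 = (l2norm (snd a))^2" using a(2) by (simp add: pl2_def l2norm_sq_ip)
  thus ?thesis using a(2) by (simp add: pl2_def power2_eq_iff_nonneg)
qed

lemma NP_iff: "a \<in> NP A c \<longleftrightarrow> a \<in> sperp A \<and> snd a = vsc c (fst a)"
  by (cases a) (auto simp: NP_def sperp_iff pl2_def)

lemma NP_pdiff: "a \<in> NP A c \<Longrightarrow> b \<in> NP A c \<Longrightarrow> pdiff a b \<in> NP A c"
  by (simp add: NP_iff S_pdiff) (simp add: pdiff_def fun_eq_iff vapp algebra_simps)

lemma NP_zero: "(vzero, vzero) \<in> NP A c"
  by (simp add: NP_iff sperp_zero fun_eq_iff vapp)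

lemma NP_ident: assumes "a \<in> NP A c"
  shows "(1 - (cmod c)^2) * (l2norm (fst a))^2 = (l2norm (G1 a))^2 - (l2norm (G2 a))^2"
proof -
  have a: "a \<in> sperp A" "snd a = vsc c (fst a)" using assms by (auto simp: NP_iff)
  have u: "fst a \<in> l2" using S_pl2[OF a(1)] by (simp add: pl2_def)
  have g: "G1 a \<in> l2" "G2 a \<in> l2" using Gl2 a(1) by auto
  have "sform a a = \<i> * complex_of_real ((l2norm (fst a))^2 - (cmod c)^2 * (l2norm (fst a))^2)"
    unfolding sform_def a(2) using u by (simp add: ip_self nsq_vsc algebra_simps)
  moreover have "sform a a = \<i> * complex_of_real ((l2norm (G1 a))^2 - (l2norm (G2 a))^2)"
    using green[OF a(1) a(1)] g by (simp add: ip_self algebra_simps)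
  ultimately have "complex_of_real ((l2norm (fst a))^2 - (cmod c)^2 * (l2norm (fst a))^2)
     = complex_of_real ((l2norm (G1 a))^2 - (l2norm (G2 a))^2)" by simp
  hence "(l2norm (fst a))^2 - (cmod c)^2 * (l2norm (fst a))^2 = (l2norm (G1 a))^2 - (l2norm (G2 a))^2"
    by (simp only: of_real_eq_iff)
  thus ?thesis by (simp add: algebra_simps)
qed

lemma NP_lower: assumes "a \<in> NP A c"
  shows "(1 - (cmod c)^2) * (l2norm (fst a))^2 \<le> (l2norm (G1 a))^2"
  using NP_ident[OF assms] by simp

lemma NP_inj: assumes c: "cmod c < 1" and a: "a \<in> NP A c" and b: "b \<in> NP A c" and e: "G1 a = G1 b"
  shows "a = b"
proof -
  have d: "pdiff a b \<in> NP A c" using a b by (rule NP_pdiff)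
  have ab: "a \<in> sperp A" "b \<in> sperp A" using a b by (auto simp: NP_iff)
  have "G1 (pdiff a b) = vzero" using Gdiff(1)[OF ab] e by simp
  hence "(1 - (cmod c)^2) * (l2norm (fst (pdiff a b)))^2 \<le> 0" using NP_lower[OF d] by simp
  moreover have "0 < 1 - (cmod c)^2" using c by (simp add: power_less_one_iff abs_square_less_1)
  ultimately have "(l2norm (fst (pdiff a b)))^2 \<le> 0" by (simp add: mult_le_0_iff)
  hence "l2norm (fst (pdiff a b)) = 0" by simp
  moreover have "fst (pdiff a b) \<in> l2" using S_pl2[OF S_pdiff[OF ab]] by (simp add: pl2_def)
  ultimately have "fst (pdiff a b) = vzero" by (rule l2norm_zero[rotated])
  hence f: "fst a = fst b" by (simp add: pdiff_def vsub_eq_vzero)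
  hence "snd a = snd b" using a b by (simp add: NP_iff)
  with f show ?thesis by (simp add: prod_eq_iff)
qed

end

context bql begin

lemma NP_padd: "a \<in> NP A c \<Longrightarrow> b \<in> NP A c \<Longrightarrow> padd a b \<in> NP A c"
  by (simp add: NP_iff S_padd) (simp add: padd_def fun_eq_iff vapp algebra_simps)
lemma NP_psc: "a \<in> NP A c \<Longrightarrow> psc k a \<in> NP A c"
  by (simp add: NP_iff S_psc) (simp add: psc_def fun_eq_iff vapp algebra_simps)

lemma G_zero: "G1 (vzero, vzero) = vzero" "G2 (vzero, vzero) = vzero"
proof -
  have e: "psc 0 (vzero, vzero) = (vzero, vzero)" by (simp add: psc_def fun_eq_iff vapp)
  show "G1 (vzero, vzero) = vzero" using Gsc(1)[OF sperp_zero, of 0] by (simp add: e fun_eq_iff vapp)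
  show "G2 (vzero, vzero) = vzero" using Gsc(2)[OF sperp_zero, of 0] by (simp add: e fun_eq_iff vapp)
qed

lemma A_zero: "(vzero, vzero) \<in> A" using A_iff sperp_zero G_zero by blast

lemma S_closed:
  assumes a: "\<And>k. a k \<in> sperp A" and cf: "lconv (\<lambda>k. fst (a k)) f" and cg: "lconv (\<lambda>k. snd (a k)) g"
    and fg: "f \<in> l2" "g \<in> l2"
  shows "(f, g) \<in> sperp A"
proof -
  have "sform (f, g) b = 0" if b: "b \<in> A" for b
  proof -
    have bl: "fst b \<in> l2" "snd b \<in> l2" using A_pl2 b by (auto simp: pl2_def)
    have al: "fst (a k) \<in> l2" "snd (a k) \<in> l2" for k using S_pl2[OF a] by (auto simp: pl2_def)
    have t1: "(\<lambda>k. ip (fst (a k)) (fst b)) \<longlonglongrightarrow> ip f (fst b)" using al bl fg cf by (intro ip_cont1)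
    have t2: "(\<lambda>k. ip (snd (a k)) (snd b)) \<longlonglongrightarrow> ip g (snd b)" using al bl fg cg by (intro ip_cont1)
    have "(\<lambda>k. sform (a k) b) \<longlonglongrightarrow> sform (f, g) b"
      unfolding sform_def by (intro tendsto_diff tendsto_mult tendsto_const) (simp_all add: t1 t2)
    moreover have "sform (a k) b = 0" for k using a b by (simp add: sperp_iff)
    ultimately have "(\<lambda>k. 0) \<longlonglongrightarrow> sform (f, g) b" by simp
    thus ?thesis by (simp add: LIMSEQ_const_iff)
  qed
  thus ?thesis using fg by (simp add: sperp_iff pl2_def)
qed

lemma G_cont:
  assumes a: "\<And>k. a k \<in> sperp A" and b: "b \<in> sperp A"
    and cf: "lconv (\<lambda>k. fst (a k)) (fst b)" and cg: "lconv (\<lambda>k. snd (a k)) (snd b)"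
  shows "lconv (\<lambda>k. G1 (a k)) (G1 b) \<and> lconv (\<lambda>k. G2 (a k)) (G2 b)"
proof -
  obtain C where C: "\<forall>a\<in>sperp A. (l2norm (G1 a))^2 + (l2norm (G2 a))^2 \<le> C * ((l2norm (fst a))^2 + (l2norm (snd a))^2)"
    using Gbnd by blast
  define C' where "C' = max C 0"
  have C'0: "0 \<le> C'" by (simp add: C'_def)
  define s where "s k = l2norm (vsub (fst (a k)) (fst b)) + l2norm (vsub (snd (a k)) (snd b))" for k
  have al: "fst (a k) \<in> l2" "snd (a k) \<in> l2" for k using S_pl2[OF a] by (auto simp: pl2_def)
  have bl: "fst b \<in> l2" "snd b \<in> l2" using S_pl2[OF b] by (auto simp: pl2_def)
  have s0: "0 \<le> s k" for k using al bl by (simp add: s_def)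
  have st: "s \<longlonglongrightarrow> 0" unfolding s_def using tendsto_add[OF cf[unfolded lconv_def] cg[unfolded lconv_def]] by simp
  have key: "(l2norm (vsub (G1 (a k)) (G1 b)))^2 + (l2norm (vsub (G2 (a k)) (G2 b)))^2 \<le> (sqrt C' * s k)^2" for k
  proof -
    have d: "pdiff (a k) b \<in> sperp A" using a b by (rule S_pdiff)
    have sb: "(l2norm (fst (pdiff (a k) b)))^2 + (l2norm (snd (pdiff (a k) b)))^2 \<le> (s k)^2"
      unfolding s_def pdiff_def using al bl by (simp add: power2_sum)
    have "(l2norm (vsub (G1 (a k)) (G1 b)))^2 + (l2norm (vsub (G2 (a k)) (G2 b)))^2
        = (l2norm (G1 (pdiff (a k) b)))^2 + (l2norm (G2 (pdiff (a k) b)))^2"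
      using a b by (simp add: Gdiff)
    also have "\<dots> \<le> C * ((l2norm (fst (pdiff (a k) b)))^2 + (l2norm (snd (pdiff (a k) b)))^2)"
      using C d by blast
    also have "\<dots> \<le> C' * ((l2norm (fst (pdiff (a k) b)))^2 + (l2norm (snd (pdiff (a k) b)))^2)"
      unfolding C'_def by (intro mult_right_mono) auto
    also have "\<dots> \<le> C' * (s k)^2"
      using sb C'0 by (rule mult_left_mono)
    also have "C' * (s k)^2 = (sqrt C' * s k)^2" using C'0 by (simp add: power_mult_distrib)
    finally show ?thesis .
  qed
  have t: "(\<lambda>k. sqrt C' * s k) \<longlonglongrightarrow> 0" using tendsto_mult[OF tendsto_const st, of "sqrt C'"] by simp
  have b1: "l2norm (vsub (G1 (a k)) (G1 b)) \<le> sqrt C' * s k" for k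
  proof -
    have "(l2norm (vsub (G1 (a k)) (G1 b)))^2 \<le> (sqrt C' * s k)^2"
      using key[of k] zero_le_power2[of "l2norm (vsub (G2 (a k)) (G2 b))"] by linarith
    moreover have "0 \<le> sqrt C' * s k" using C'0 s0[of k] by simp
    ultimately show ?thesis by (rule power2_le_imp_le)
  qed
  have b2: "l2norm (vsub (G2 (a k)) (G2 b)) \<le> sqrt C' * s k" for k
  proof -
    have "(l2norm (vsub (G2 (a k)) (G2 b)))^2 \<le> (sqrt C' * s k)^2"
      using key[of k] zero_le_power2[of "l2norm (vsub (G1 (a k)) (G1 b))"] by linarith
    moreover have "0 \<le> sqrt C' * s k" using C'0 s0[of k] by simp
    ultimately show ?thesis by (rule power2_le_imp_le)
  qed
  have gl: "G1 (a k) \<in> l2" "G2 (a k) \<in> l2" "G1 b \<in> l2" "G2 b \<in> l2" for k using Gl2 a b by auto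
  show ?thesis unfolding lconv_def
  proof
    show "(\<lambda>k. l2norm (vsub (G1 (a k)) (G1 b))) \<longlonglongrightarrow> 0"
      by (rule Lim_null_comparison[OF _ t]) (rule always_eventually, use b1 gl in simp)
    show "(\<lambda>k. l2norm (vsub (G2 (a k)) (G2 b))) \<longlonglongrightarrow> 0"
      by (rule Lim_null_comparison[OF _ t]) (rule always_eventually, use b2 gl in simp)
  qed
qed

end

context bql begin

lemma dense_part:
  assumes c: "cmod c < 1" and w: "w \<in> H1" and wR: "\<forall>a\<in>NP A c. ip w (G1 a) = 0"
  shows "w = vzero"
proof -
  have wl: "w \<in> l2" using w H1 closed_subspace_l2 by blast
  obtain b where b: "b \<in> sperp A" "G1 b = w" "G2 b = vzero"
    using Gonto[OF w closed_subspace_vzero[OF H2]] by blast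
  have bl: "fst b \<in> l2" "snd b \<in> l2" using S_pl2[OF b(1)] by (auto simp: pl2_def)
  define h where "h = vsub (fst b) (vsc (cnj c) (snd b))"
  have hl: "h \<in> l2" using bl by (simp add: h_def)
  have hU: "ip v h = 0" if v: "v \<in> l2" "(v, vsc c v) \<in> sperp A" for v
  proof -
    have aN: "(v, vsc c v) \<in> NP A c" using v by (simp add: NP_iff)
    have "sform (v, vsc c v) b = \<i> * ip (G1 (v, vsc c v)) w - \<i> * ip (G2 (v, vsc c v)) vzero"
      using green[OF v(2) b(1)] b by simp
    also have "ip (G1 (v, vsc c v)) w = cnj (ip w (G1 (v, vsc c v)))"
      using Gl2[OF v(2)] wl by (simp add: ip_cnj[of w])
    also have "ip w (G1 (v, vsc c v)) = 0" using wR aN by blast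
    finally have "sform (v, vsc c v) b = 0" by simp
    moreover have "sform (v, vsc c v) b = \<i> * ip v h"
      unfolding sform_def h_def using v bl by (simp add: ip_vsub2 ip_vsc1 ip_vsc2 algebra_simps)
    ultimately show ?thesis by simp
  qed
  define M where "M = {vsub (fst e) (vsc (cnj c) (snd e)) | e. e \<in> A}"
  have Ml2: "m \<in> M \<Longrightarrow> m \<in> l2" for m using A_pl2 by (auto simp: M_def pl2_def)
  have subM: "subsp M" unfolding subsp_def
  proof (intro conjI ballI allI)
    show "M \<subseteq> l2" using Ml2 by blast
    show "vzero \<in> M" unfolding M_def using A_zero by (intro CollectI exI[of _ "(vzero, vzero)"]) (simp add: fun_eq_iff vapp)
    fix x y assume "x \<in> M" "y \<in> M"
    then obtain e1 e2 where ee: "e1 \<in> A" "e2 \<in> A" and xe: "x = vsub (fst e1) (vsc (cnj c) (snd e1))"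
      and ye: "y = vsub (fst e2) (vsc (cnj c) (snd e2))" by (auto simp: M_def)
    have "vadd x y = vsub (fst (padd e1 e2)) (vsc (cnj c) (snd (padd e1 e2)))"
      unfolding xe ye by (simp add: padd_def fun_eq_iff vapp algebra_simps)
    thus "vadd x y \<in> M" unfolding M_def using A_padd[OF ee] by blast
  next
    fix k x assume "x \<in> M"
    then obtain e1 where ee: "e1 \<in> A" and xe: "x = vsub (fst e1) (vsc (cnj c) (snd e1))" by (auto simp: M_def)
    have "vsc k x = vsub (fst (psc k e1)) (vsc (cnj c) (snd (psc k e1)))"
      unfolding xe by (simp add: psc_def fun_eq_iff vapp algebra_simps)
    thus "vsc k x \<in> M" unfolding M_def using A_psc[OF ee] by blast
  qed
  obtain q where q: "q \<in> l2" and qX: "\<exists>Y. (\<forall>k. Y k \<in> M) \<and> lconv Y q" and qo: "\<forall>m\<in>M. ip (vsub h q) m = 0"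
    using projection[OF subM hl] by blast
  obtain Y where Y: "\<And>k. Y k \<in> M" and Yq: "lconv Y q" using qX by blast
  define v where "v = vsub h q"
  have vl: "v \<in> l2" using hl q by (simp add: v_def)
  have vS: "(v, vsc c v) \<in> sperp A"
    unfolding sperp_iff
  proof (intro conjI ballI)
    show "pl2 (v, vsc c v)" using vl by (simp add: pl2_def)
    fix e assume e: "e \<in> A"
    have el: "fst e \<in> l2" "snd e \<in> l2" using A_pl2 e by (auto simp: pl2_def)
    have "vsub (fst e) (vsc (cnj c) (snd e)) \<in> M" using e unfolding M_def by blast
    hence "ip v (vsub (fst e) (vsc (cnj c) (snd e))) = 0" using qo by (simp add: v_def)
    moreover have "sform (v, vsc c v) e = \<i> * ip v (vsub (fst e) (vsc (cnj c) (snd e)))"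
      unfolding sform_def using vl el by (simp add: ip_vsub2 ip_vsc1 ip_vsc2 algebra_simps)
    ultimately show "sform (v, vsc c v) e = 0" by simp
  qed
  have vh: "ip v h = 0" using hU[OF vl vS] .
  have Yl: "Y k \<in> l2" for k using Y Ml2 by blast
  have vq: "ip v q = 0"
  proof -
    have "(\<lambda>k. ip v (Y k)) \<longlonglongrightarrow> ip v q" using Yl q vl Yq by (rule ip_cont2)
    moreover have "ip v (Y k) = 0" for k using qo Y[of k] unfolding v_def by blast
    ultimately show ?thesis by (simp add: LIMSEQ_const_iff)
  qed
  have "ip v v = ip v h - ip v q" unfolding v_def using hl q by (simp add: ip_vsub2)
  hence "ip v v = 0" using vh vq by simp
  hence "v = vzero" using vl by (rule ip_self_zero[rotated])
  hence hq: "h = q" by (simp add: v_def vsub_eq_vzero)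
  have "\<forall>k. \<exists>e. e \<in> A \<and> Y k = vsub (fst e) (vsc (cnj c) (snd e))"
  proof
    fix k show "\<exists>e. e \<in> A \<and> Y k = vsub (fst e) (vsc (cnj c) (snd e))" using Y[of k] unfolding M_def by blast
  qed
  then obtain E where E: "\<And>k. E k \<in> A" and YE: "\<And>k. Y k = vsub (fst (E k)) (vsc (cnj c) (snd (E k)))"
    by metis
  have El: "fst (E k) \<in> l2" "snd (E k) \<in> l2" for k using A_pl2 E by (auto simp: pl2_def)
  have c1: "0 < 1 - cmod c" using c by simp
  have bound: "l2norm (fst (pdiff (E m) (E n))) \<le> l2norm (vsub (Y m) (Y n)) / (1 - cmod c)
      \<and> l2norm (snd (pdiff (E m) (E n))) \<le> l2norm (vsub (Y m) (Y n)) / (1 - cmod c)" for m n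
  proof -
    have d: "pdiff (E m) (E n) \<in> A" using E[of m] E[of n] by (rule A_pdiff)
    define x where "x = fst (pdiff (E m) (E n))"
    define y where "y = snd (pdiff (E m) (E n))"
    have xy: "x \<in> l2" "y \<in> l2" using El by (simp_all add: x_def y_def pdiff_def)
    have nxy: "l2norm x = l2norm y" using A_norm[OF d] by (simp add: x_def y_def)
    have "vsub (Y m) (Y n) = vsub x (vsc (cnj c) y)"
      by (simp add: YE x_def y_def pdiff_def fun_eq_iff vapp algebra_simps)
    moreover have "x = vadd (vsub x (vsc (cnj c) y)) (vsc (cnj c) y)" by (simp add: fun_eq_iff vapp)
    hence "l2norm x \<le> l2norm (vsub x (vsc (cnj c) y)) + l2norm (vsc (cnj c) y)"
      using xy by (metis l2norm_triangle l2_vsub l2_vsc)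
    ultimately have "l2norm x \<le> l2norm (vsub (Y m) (Y n)) + cmod c * l2norm x"
      using xy nxy by (simp add: l2norm_vsc)
    hence "(1 - cmod c) * l2norm x \<le> l2norm (vsub (Y m) (Y n))" by (simp add: algebra_simps)
    hence "l2norm x \<le> l2norm (vsub (Y m) (Y n)) / (1 - cmod c)" using c1 by (simp add: field_simps)
    thus ?thesis using nxy by (simp add: x_def y_def)
  qed
  have cauchyE: "\<exists>N. \<forall>m\<ge>N. \<forall>n\<ge>N. l2norm (vsub (F m) (F n)) < e"
    if F: "F = (\<lambda>k. fst (E k)) \<or> F = (\<lambda>k. snd (E k))" and e: "e > 0" for F e
  proof -
    obtain N where N: "\<forall>m\<ge>N. \<forall>n\<ge>N. l2norm (vsub (Y m) (Y n)) < e * (1 - cmod c)"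
      using lconv_cauchy[OF Yl q Yq, of "e * (1 - cmod c)"] e c1 by auto
    show ?thesis
    proof (intro exI allI impI)
      fix m n assume mn: "N \<le> m" "N \<le> n"
      have "l2norm (vsub (Y m) (Y n)) / (1 - cmod c) < e" using N mn c1 by (simp add: divide_less_eq)
      thus "l2norm (vsub (F m) (F n)) < e" using bound[of m n] F by (auto simp: pdiff_def)
    qed
  qed
  obtain x where x: "x \<in> l2" "lconv (\<lambda>k. fst (E k)) x"
    using l2_complete[of "\<lambda>k. fst (E k)"] El cauchyE by blast
  obtain y where y: "y \<in> l2" "lconv (\<lambda>k. snd (E k)) y"
    using l2_complete[of "\<lambda>k. snd (E k)"] El cauchyE by blast
  have xyS: "(x, y) \<in> sperp A" using S_closed[OF A_S[OF E] x(2) y(2) x(1) y(1)] .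
  have Gc: "lconv (\<lambda>k. G1 (E k)) (G1 (x, y)) \<and> lconv (\<lambda>k. G2 (E k)) (G2 (x, y))"
    using G_cont[OF A_S[OF E] xyS] x y by simp
  have z0: "lconv (\<lambda>k. vzero) vzero" by (simp add: lconv_def)
  have "G1 (x, y) = vzero"
    using lconv_unique[of "\<lambda>k. vzero" "G1 (x,y)" vzero] Gc z0 A_G(1)[OF E] Gl2(1)[OF xyS] by simp
  moreover have "G2 (x, y) = vzero"
    using lconv_unique[of "\<lambda>k. vzero" "G2 (x,y)" vzero] Gc z0 A_G(2)[OF E] Gl2(2)[OF xyS] by simp
  ultimately have xyA: "(x, y) \<in> A" using xyS A_iff by blast
  have "lconv Y (vsub x (vsc (cnj c) y))"
    unfolding YE using El x y by (intro lconv_sub lconv_sc) auto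
  hence qxy: "q = vsub x (vsc (cnj c) y)"
    using lconv_unique[OF Yl q _ Yq] x y by simp
  define b' where "b' = pdiff b (x, y)"
  have b'S: "b' \<in> sperp A" unfolding b'_def using b(1) xyS by (rule S_pdiff)
  have Gb': "G1 b' = w" "G2 b' = vzero"
    unfolding b'_def using Gdiff[OF b(1) xyS] b A_G[OF xyA] by (simp_all add: fun_eq_iff vapp)
  have b'l: "snd b' \<in> l2" using S_pl2[OF b'S] by (simp add: pl2_def)
  have "fst b' = vsc (cnj c) (snd b')"
  proof -
    have "vsub (fst b') (vsc (cnj c) (snd b')) = vsub h q"
      by (simp add: b'_def pdiff_def h_def qxy fun_eq_iff vapp algebra_simps)
    thus ?thesis using hq by (simp add: vsub_eq_vzero)
  qed
  hence "sform b' b' = \<i> * complex_of_real ((cmod c)^2 * (l2norm (snd b'))^2 - (l2norm (snd b'))^2)"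
    unfolding sform_def using b'l
    by (simp add: ip_self nsq_vsc algebra_simps del: of_real_power)
  moreover have "sform b' b' = \<i> * complex_of_real ((l2norm w)^2)"
    using green[OF b'S b'S] Gb' wl by (simp add: ip_self)
  ultimately have "complex_of_real ((cmod c)^2 * (l2norm (snd b'))^2 - (l2norm (snd b'))^2) = complex_of_real ((l2norm w)^2)"
    by simp
  hence eq: "(cmod c)^2 * (l2norm (snd b'))^2 - (l2norm (snd b'))^2 = (l2norm w)^2" by (simp only: of_real_eq_iff)
  have "(cmod c)^2 \<le> 1" using c by (simp add: less_imp_le power_le_one)
  hence "(cmod c)^2 * (l2norm (snd b'))^2 \<le> 1 * (l2norm (snd b'))^2" by (intro mult_right_mono) auto
  hence "(l2norm w)^2 \<le> 0" using eq by linarith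
  hence "l2norm w = 0" by (simp add: power2_eq_square mult_le_0_iff) (smt (verit) l2norm_nonneg wl)
  thus ?thesis using wl by (rule l2norm_zero[rotated])
qed

end

context bql begin

lemma core_surj:
  assumes c: "cmod c < 1" and z: "z \<in> H1"
  shows "\<exists>a\<in>NP A c. G1 a = z"
proof -
  define R where "R = G1 ` NP A c"
  have NPS: "a \<in> NP A c \<Longrightarrow> a \<in> sperp A" for a by (simp add: NP_iff)
  have Rl2: "r \<in> R \<Longrightarrow> r \<in> l2" for r using Gl2 NPS by (auto simp: R_def)
  have subR: "subsp R" unfolding subsp_def
  proof (intro conjI ballI allI)
    show "R \<subseteq> l2" using Rl2 by blast
    show "vzero \<in> R" unfolding R_def using NP_zero G_zero by (metis image_eqI)
    fix x y assume "x \<in> R" "y \<in> R"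
    then obtain a1 a2 where "a1 \<in> NP A c" "a2 \<in> NP A c" "x = G1 a1" "y = G1 a2" by (auto simp: R_def)
    thus "vadd x y \<in> R" unfolding R_def using NP_padd Gadd(1) NPS by (metis image_eqI)
  next
    fix k x assume "x \<in> R"
    then obtain a1 where "a1 \<in> NP A c" "x = G1 a1" by (auto simp: R_def)
    thus "vsc k x \<in> R" unfolding R_def using NP_psc Gsc(1) NPS by (metis image_eqI)
  qed
  have zl: "z \<in> l2" using z H1 closed_subspace_l2 by blast
  from projection[OF subR zl] obtain p where p: "p \<in> l2" and pX: "\<exists>X. (\<forall>k. X k \<in> R) \<and> lconv X p"
    and po: "\<forall>r\<in>R. ip (vsub z p) r = 0" by (elim bexE conjE)
  from pX obtain X where X0: "\<forall>k. X k \<in> R" and Xp: "lconv X p" by (elim exE conjE)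
  have X: "X k \<in> R" for k by (rule X0[rule_format])
  have "\<forall>k. \<exists>a. a \<in> NP A c \<and> G1 a = X k"
  proof
    fix k
    have "X k \<in> G1 ` NP A c" using X[of k] by (simp only: R_def)
    then obtain b where "b \<in> NP A c" "X k = G1 b" by (rule imageE)
    thus "\<exists>a. a \<in> NP A c \<and> G1 a = X k" by (intro exI[of _ b]) simp
  qed
  then obtain a where a: "\<And>k. a k \<in> NP A c" and aX: "\<And>k. G1 (a k) = X k" by metis
  have aS: "a k \<in> sperp A" for k using a NPS by blast
  have ul: "fst (a k) \<in> l2" for k using S_pl2[OF aS] by (simp add: pl2_def)
  have Xl: "X k \<in> l2" for k using X Rl2 by blast
  define \<delta> where "\<delta> = 1 - (cmod c)^2"
  have \<delta>: "0 < \<delta>" using c by (simp add: \<delta>_def power_less_one_iff abs_square_less_1)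
  have bnd: "l2norm (vsub (fst (a m)) (fst (a n))) \<le> l2norm (vsub (X m) (X n)) / sqrt \<delta>" for m n
  proof -
    have d: "pdiff (a m) (a n) \<in> NP A c" using a[of m] a[of n] by (rule NP_pdiff)
    have "\<delta> * (l2norm (fst (pdiff (a m) (a n))))^2 \<le> (l2norm (G1 (pdiff (a m) (a n))))^2"
      using NP_lower[OF d] by (simp add: \<delta>_def)
    moreover have "G1 (pdiff (a m) (a n)) = vsub (X m) (X n)" using Gdiff(1)[OF aS aS] aX by simp
    moreover have "fst (pdiff (a m) (a n)) = vsub (fst (a m)) (fst (a n))" by (simp add: pdiff_def)
    ultimately have "\<delta> * (l2norm (vsub (fst (a m)) (fst (a n))))^2 \<le> (l2norm (vsub (X m) (X n)))^2"
      by simp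
    hence "(sqrt \<delta> * l2norm (vsub (fst (a m)) (fst (a n))))^2 \<le> (l2norm (vsub (X m) (X n)))^2"
      using \<delta> by (simp add: power_mult_distrib)
    hence "sqrt \<delta> * l2norm (vsub (fst (a m)) (fst (a n))) \<le> l2norm (vsub (X m) (X n))"
    proof (rule power2_le_imp_le)
      show "0 \<le> l2norm (vsub (X m) (X n))" using Xl[of m] Xl[of n] by simp
    qed
    thus ?thesis using \<delta> by (simp add: field_simps)
  qed
  have cu: "\<exists>N. \<forall>m\<ge>N. \<forall>n\<ge>N. l2norm (vsub (fst (a m)) (fst (a n))) < e" if e: "e > 0" for e
  proof -
    obtain N where N: "\<forall>m\<ge>N. \<forall>n\<ge>N. l2norm (vsub (X m) (X n)) < e * sqrt \<delta>"
      using lconv_cauchy[OF Xl p Xp, of "e * sqrt \<delta>"] e \<delta> by auto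
    show ?thesis
    proof (intro exI allI impI)
      fix m n assume "N \<le> m" "N \<le> n"
      hence "l2norm (vsub (X m) (X n)) / sqrt \<delta> < e" using N \<delta> by (simp add: divide_less_eq)
      thus "l2norm (vsub (fst (a m)) (fst (a n))) < e" using bnd[of m n] by linarith
    qed
  qed
  obtain f where f: "f \<in> l2" "lconv (\<lambda>k. fst (a k)) f" using l2_complete[of "\<lambda>k. fst (a k)"] ul cu by blast
  have sa: "snd (a k) = vsc c (fst (a k))" for k using a by (simp add: NP_iff)
  have g: "lconv (\<lambda>k. snd (a k)) (vsc c f)" unfolding sa using ul f by (intro lconv_sc)
  have fS: "(f, vsc c f) \<in> sperp A" using S_closed[OF aS f(2) g] f by simp
  have fN: "(f, vsc c f) \<in> NP A c" using fS by (simp add: NP_iff)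
  have "lconv (\<lambda>k. G1 (a k)) (G1 (f, vsc c f))" using G_cont[OF aS fS] f g by simp
  hence "lconv X (G1 (f, vsc c f))" by (simp add: aX)
  hence pG: "p = G1 (f, vsc c f)" using lconv_unique[OF Xl p Gl2(1)[OF fS] Xp] by simp
  define w where "w = vsub z p"
  have pH: "p \<in> H1" using pG Gin(1)[OF fS] by simp
  have wH: "w \<in> H1" unfolding w_def using H1 z pH by (rule closed_subspace_vsub)
  have "\<forall>a\<in>NP A c. ip w (G1 a) = 0" using po by (auto simp: R_def w_def)
  hence "w = vzero" using dense_part[OF c wH] by blast
  hence "z = p" by (simp add: w_def vsub_eq_vzero)
  thus ?thesis using pG fN by blast
qed

lemma core_unique:
  assumes c: "cmod c < 1" and z: "z \<in> H1"
  shows "\<exists>!a. a \<in> NP A c \<and> G1 a = z"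
  using core_surj[OF c z] NP_inj[OF c] by blast

lemma NP_lip:
  assumes a: "a \<in> NP A c" and a': "a' \<in> NP A c'" and e: "G1 a = G1 a'"
  shows "(1 - cmod c) * l2norm (vsub (fst a) (fst a')) \<le> cmod (c - c') * l2norm (fst a')"
proof -
  have aS: "a \<in> sperp A" "a' \<in> sperp A" using a a' by (auto simp: NP_iff)
  have sa: "snd a = vsc c (fst a)" "snd a' = vsc c' (fst a')" using a a' by (auto simp: NP_iff)
  have ul: "fst a \<in> l2" "fst a' \<in> l2" using S_pl2[OF aS(1)] S_pl2[OF aS(2)] by (auto simp: pl2_def)
  define d where "d = pdiff a a'"
  have dS: "d \<in> sperp A" unfolding d_def using aS by (rule S_pdiff)
  have dl: "fst d \<in> l2" "snd d \<in> l2" using S_pl2[OF dS] by (auto simp: pl2_def)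
  have G1d: "G1 d = vzero" unfolding d_def using Gdiff(1)[OF aS] e by simp
  have g2: "G2 d \<in> l2" using Gl2(2)[OF dS] .
  have "sform d d = \<i> * complex_of_real ((l2norm (fst d))^2 - (l2norm (snd d))^2)"
    unfolding sform_def using dl by (simp add: ip_self algebra_simps)
  moreover have "sform d d = \<i> * complex_of_real (- ((l2norm (G2 d))^2))"
    using green[OF dS dS] G1d g2 by (simp add: ip_self)
  ultimately have "\<i> * complex_of_real ((l2norm (fst d))^2 - (l2norm (snd d))^2) = \<i> * complex_of_real (- ((l2norm (G2 d))^2))"
    by (rule trans[OF sym])
  hence "complex_of_real ((l2norm (fst d))^2 - (l2norm (snd d))^2) = complex_of_real (- ((l2norm (G2 d))^2))"
    by (simp only: mult_cancel_left complex_i_not_zero simp_thms)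
  hence "(l2norm (fst d))^2 - (l2norm (snd d))^2 = - ((l2norm (G2 d))^2)" by (simp only: of_real_eq_iff)
  moreover have "\<And>A B C::real. A - B = - C \<Longrightarrow> 0 \<le> C \<Longrightarrow> A \<le> B" by linarith
  ultimately have "(l2norm (fst d))^2 \<le> (l2norm (snd d))^2" using zero_le_power2[of "l2norm (G2 d)"] by blast
  hence fd: "l2norm (fst d) \<le> l2norm (snd d)" by (rule power2_le_imp_le) (simp add: dl(2))
  have "snd d = vadd (vsc c (vsub (fst a) (fst a'))) (vsc (c - c') (fst a'))"
    unfolding d_def pdiff_def sa by (simp add: fun_eq_iff vapp algebra_simps)
  hence "l2norm (snd d) \<le> l2norm (vsc c (vsub (fst a) (fst a'))) + l2norm (vsc (c - c') (fst a'))"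
    using ul by (simp add: l2norm_triangle)
  also have "\<dots> = cmod c * l2norm (vsub (fst a) (fst a')) + cmod (c - c') * l2norm (fst a')"
    using ul by (simp add: l2norm_vsc)
  finally have "l2norm (vsub (fst a) (fst a')) \<le> cmod c * l2norm (vsub (fst a) (fst a')) + cmod (c - c') * l2norm (fst a')"
    using fd by (simp add: d_def pdiff_def)
  thus ?thesis by (simp add: algebra_simps)
qed

end

lemma norm_bound_rho:
  assumes "(1 - (cmod c)^2) * X^2 \<le> V^2" "cmod c \<le> \<rho>" "\<rho> < 1" "0 \<le> X" "0 \<le> V"
  shows "(1 - \<rho>) * X \<le> V"
proof -
  have r0: "0 < 1 - \<rho>" "1 - \<rho> \<le> 1" using assms(2,3) norm_ge_zero[of c] by linarith+
  have "(1 - \<rho>)^2 \<le> 1 - \<rho>" using r0 by (simp add: power2_eq_square mult_left_le)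
  also have "1 - \<rho> \<le> 1 - cmod c" using assms(2) by simp
  also have "1 - cmod c \<le> 1 - (cmod c)^2"
  proof -
    have "cmod c < 1" using assms(2,3) by simp
    hence "(cmod c)^2 \<le> cmod c" by (simp add: power2_eq_square mult_left_le_one_le)
    thus ?thesis by simp
  qed
  finally have "(1 - \<rho>)^2 * X^2 \<le> (1 - (cmod c)^2) * X^2" by (intro mult_right_mono) auto
  also have "\<dots> \<le> V^2" by (rule assms(1))
  finally have "((1 - \<rho>) * X)^2 \<le> V^2" by (simp add: power_mult_distrib)
  thus ?thesis by (rule power2_le_imp_le) (rule assms(5))
qed

lemma kernel_cont:
  fixes F G :: "complex \<Rightarrow> vec \<Rightarrow> vec" and W :: "complex \<Rightarrow> complex \<Rightarrow> vec" and Hb :: "vec set"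
  assumes Hb: "closed_subspace Hb" and y: "y \<in> l2"
   and Fb: "\<And>c. cmod c < 1 \<Longrightarrow> F c y \<in> l2 \<and> (1 - (cmod c)^2) * (l2norm (F c y))^2 \<le> (l2norm y)^2"
   and Fl: "\<And>c c'. cmod c < 1 \<Longrightarrow> cmod c' < 1 \<Longrightarrow>
              (1 - cmod c) * l2norm (vsub (F c y) (F c' y)) \<le> cmod (c - c') * l2norm (F c' y)"
   and Gb: "\<And>c v. cmod c < 1 \<Longrightarrow> v \<in> Hb \<Longrightarrow> G c v \<in> l2 \<and> (1 - (cmod c)^2) * (l2norm (G c v))^2 \<le> (l2norm v)^2"
   and Gl: "\<And>c c' v. cmod c < 1 \<Longrightarrow> cmod c' < 1 \<Longrightarrow> v \<in> Hb \<Longrightarrow>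
              (1 - cmod c) * l2norm (vsub (G c v) (G c' v)) \<le> cmod (c - c') * l2norm (G c' v)"
   and W: "\<And>a b. cmod a < 1 \<Longrightarrow> cmod b < 1 \<Longrightarrow> W a b \<in> Hb \<and> (\<forall>v\<in>Hb. ip (W a b) v = ip (F (cnj b) y) (G (cnj a) v))"
   and l: "cmod l < 1" and m: "cmod m < 1"
  shows "((\<lambda>(a, b). l2norm (vsub (W a b) (W l m))) \<longlongrightarrow> 0) (at (l, m) within U)"
proof -
  define \<rho> where "\<rho> = (1 + max (cmod l) (cmod m)) / 2"
  have \<rho>1: "\<rho> < 1" using l m by (simp add: \<rho>_def max_def)
  have \<rho>l: "cmod l < \<rho>" "cmod m < \<rho>" using l m by (auto simp: \<rho>_def max_def)
  define r where "r = 1 - \<rho>"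
  have r0: "0 < r" using \<rho>1 by (simp add: r_def)
  define Y where "Y = l2norm y"
  have Y0: "0 \<le> Y" using y by (simp add: Y_def)
  have main: "l2norm (vsub (W a b) (W l m)) \<le> (cmod (a - l) + cmod (b - m)) * Y / r^3"
    if a: "cmod a \<le> \<rho>" and b: "cmod b \<le> \<rho>" for a b
  proof -
    have a1: "cmod a < 1" and b1: "cmod b < 1" using a b \<rho>1 by linarith+
    have ca: "cmod (cnj a) < 1" "cmod (cnj a) \<le> \<rho>" "cmod (cnj l) < 1" "cmod (cnj l) \<le> \<rho>"
      using a a1 l \<rho>l by auto
    have cb: "cmod (cnj b) < 1" "cmod (cnj b) \<le> \<rho>" "cmod (cnj m) < 1" "cmod (cnj m) \<le> \<rho>"
      using b b1 m \<rho>l by auto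
    obtain Wab: "W a b \<in> Hb" and Wabc: "\<forall>v\<in>Hb. ip (W a b) v = ip (F (cnj b) y) (G (cnj a) v)" using W[OF a1 b1] by blast
    obtain Wlm: "W l m \<in> Hb" and Wlmc: "\<forall>v\<in>Hb. ip (W l m) v = ip (F (cnj m) y) (G (cnj l) v)" using W[OF l m] by blast
    define D where "D = vsub (W a b) (W l m)"
    have DH: "D \<in> Hb" unfolding D_def using Hb Wab Wlm by (rule closed_subspace_vsub)
    have Dl: "D \<in> l2" using DH Hb closed_subspace_l2 by blast
    have Wl: "W a b \<in> l2" "W l m \<in> l2" using Wab Wlm Hb closed_subspace_l2 by blast+
    define d where "d = l2norm D"
    have d0: "0 \<le> d" using Dl by (simp add: d_def)
    define f1 where "f1 = F (cnj b) y"
    define f2 where "f2 = F (cnj m) y"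
    define g1 where "g1 = G (cnj a) D"
    define g2 where "g2 = G (cnj l) D"
    have fl: "f1 \<in> l2" "f2 \<in> l2" using Fb cb by (auto simp: f1_def f2_def)
    have gl: "g1 \<in> l2" "g2 \<in> l2" using Gb ca DH by (auto simp: g1_def g2_def)
    have ipD: "ip D D = ip (vsub f1 f2) g1 + ip f2 (vsub g1 g2)"
    proof -
      have "ip (vsub (W a b) (W l m)) D = ip (W a b) D - ip (W l m) D" using Wl Dl by (rule ip_vsub1)
      hence "ip D D = ip (W a b) D - ip (W l m) D" by (simp only: D_def[symmetric])
      also have "\<dots> = ip f1 g1 - ip f2 g2" using Wabc Wlmc DH by (simp add: f1_def f2_def g1_def g2_def)
      also have "\<dots> = ip (vsub f1 f2) g1 + ip f2 (vsub g1 g2)" using fl gl by (simp add: ip_vsub1 ip_vsub2)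
      finally show ?thesis .
    qed
    have bf2: "r * l2norm f2 \<le> Y" unfolding r_def Y_def f2_def
      using Fb[OF cb(3)] y by (intro norm_bound_rho[where c="cnj m", OF conjunct2[OF Fb[OF cb(3)]] cb(4) \<rho>1]) simp_all
    have bg1: "r * l2norm g1 \<le> d" unfolding r_def d_def g1_def
      using Gb[OF ca(1) DH] Dl by (intro norm_bound_rho[where c="cnj a", OF conjunct2[OF Gb[OF ca(1) DH]] ca(2) \<rho>1]) simp_all
    have bg2: "r * l2norm g2 \<le> d" unfolding r_def d_def g2_def
      using Gb[OF ca(3) DH] Dl by (intro norm_bound_rho[where c="cnj l", OF conjunct2[OF Gb[OF ca(3) DH]] ca(4) \<rho>1]) simp_all
    have df: "r * l2norm (vsub f1 f2) \<le> cmod (b - m) * l2norm f2"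
    proof -
      have "r * l2norm (vsub f1 f2) \<le> (1 - cmod (cnj b)) * l2norm (vsub f1 f2)"
        using cb(2) fl by (intro mult_right_mono) (auto simp: r_def)
      also have "\<dots> \<le> cmod (cnj b - cnj m) * l2norm f2" unfolding f1_def f2_def using Fl[OF cb(1) cb(3)] .
      also have "cmod (cnj b - cnj m) = cmod (b - m)" by (metis complex_cnj_diff complex_mod_cnj)
      finally show ?thesis .
    qed
    have dg: "r * l2norm (vsub g1 g2) \<le> cmod (a - l) * l2norm g2"
    proof -
      have "r * l2norm (vsub g1 g2) \<le> (1 - cmod (cnj a)) * l2norm (vsub g1 g2)"
        using ca(2) gl by (intro mult_right_mono) (auto simp: r_def)
      also have "\<dots> \<le> cmod (cnj a - cnj l) * l2norm g2" unfolding g1_def g2_def using Gl[OF ca(1) ca(3) DH] .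
      also have "cmod (cnj a - cnj l) = cmod (a - l)" by (metis complex_cnj_diff complex_mod_cnj)
      finally show ?thesis .
    qed
        have "d^2 = Re (ip D D)" unfolding d_def using Dl by (rule l2norm_sq_ip)
    also have "\<dots> \<le> cmod (ip D D)" by (rule complex_Re_le_cmod)
    also have "\<dots> \<le> cmod (ip (vsub f1 f2) g1) + cmod (ip f2 (vsub g1 g2))" unfolding ipD by (rule norm_triangle_ineq)
    also have "\<dots> \<le> l2norm (vsub f1 f2) * l2norm g1 + l2norm f2 * l2norm (vsub g1 g2)"
      using fl gl by (intro add_mono cauchy_schwarz) auto
    finally have d2: "d^2 \<le> l2norm (vsub f1 f2) * l2norm g1 + l2norm f2 * l2norm (vsub g1 g2)" .
    have nn: "0 \<le> l2norm (vsub f1 f2)" "0 \<le> l2norm g1" "0 \<le> l2norm f2" "0 \<le> l2norm (vsub g1 g2)" "0 \<le> l2norm g2"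
      using fl gl by auto
    have "r^3 * (l2norm (vsub f1 f2) * l2norm g1) = (r * l2norm (vsub f1 f2)) * (r * l2norm g1) * r"
      by (simp add: power3_eq_cube)
    also have "\<dots> \<le> (cmod (b - m) * l2norm f2) * d * r"
      using nn r0 by (intro mult_right_mono mult_mono[OF df bg1]) auto
    also have "\<dots> = cmod (b - m) * d * (r * l2norm f2)" by simp
    also have "\<dots> \<le> cmod (b - m) * d * Y" using bf2 d0 by (intro mult_left_mono) auto
    finally have t1: "r^3 * (l2norm (vsub f1 f2) * l2norm g1) \<le> cmod (b - m) * d * Y" .
    have "r^3 * (l2norm f2 * l2norm (vsub g1 g2)) = (r * l2norm f2) * (r * l2norm (vsub g1 g2)) * r"
      by (simp add: power3_eq_cube)
    also have "\<dots> \<le> Y * (cmod (a - l) * l2norm g2) * r"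
      using nn r0 Y0 by (intro mult_right_mono mult_mono[OF bf2 dg]) auto
    also have "\<dots> = Y * cmod (a - l) * (r * l2norm g2)" by simp
    also have "\<dots> \<le> Y * cmod (a - l) * d" using bg2 Y0 by (intro mult_left_mono) auto
    finally have t2: "r^3 * (l2norm f2 * l2norm (vsub g1 g2)) \<le> Y * cmod (a - l) * d" .
    have "r^3 * d^2 \<le> r^3 * (l2norm (vsub f1 f2) * l2norm g1 + l2norm f2 * l2norm (vsub g1 g2))"
      using d2 r0 by (intro mult_left_mono) auto
    also have "\<dots> \<le> cmod (b - m) * d * Y + Y * cmod (a - l) * d" using t1 t2 by (simp add: distrib_left)
    also have "\<dots> = ((cmod (a - l) + cmod (b - m)) * Y) * d" by (simp add: algebra_simps)
    finally have key: "r^3 * d * d \<le> ((cmod (a - l) + cmod (b - m)) * Y) * d" by (simp add: power2_eq_square mult.assoc)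
    have "r^3 * d \<le> (cmod (a - l) + cmod (b - m)) * Y"
    proof (cases "d = 0")
      case True thus ?thesis using Y0 by simp
    next
      case False hence "0 < d" using d0 by simp
      thus ?thesis using key by (simp add: mult_le_cancel_right)
    qed
    hence "d \<le> (cmod (a - l) + cmod (b - m)) * Y / r^3" using r0 by (simp add: field_simps)
    thus ?thesis by (simp add: d_def D_def)
  qed
  define e0 where "e0 = min (\<rho> - cmod l) (\<rho> - cmod m)"
  have e0: "0 < e0" using \<rho>l by (simp add: e0_def)
  have ev: "eventually (\<lambda>x. norm ((\<lambda>(a, b). l2norm (vsub (W a b) (W l m))) x)
      \<le> (cmod (fst x - l) + cmod (snd x - m)) * Y / r^3) (at (l, m) within U)"
    unfolding eventually_at
  proof (intro exI[of _ e0] conjI allI impI ballI)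
    show "0 < e0" by (rule e0)
    fix x :: "complex \<times> complex" assume "x \<in> U" "x \<noteq> (l, m) \<and> dist x (l, m) < e0"
    hence dx: "dist x (l, m) < e0" by simp
    have "dist (fst x) l < e0" using dist_fst_le[of x "(l,m)"] dx by simp
    hence "cmod (fst x - l) < \<rho> - cmod l" by (simp add: dist_norm e0_def)
    hence fa: "cmod (fst x) \<le> \<rho>" using norm_triangle_ineq2[of "fst x" l] by linarith
    have "dist (snd x) m < e0" using dist_snd_le[of x "(l,m)"] dx by simp
    hence "cmod (snd x - m) < \<rho> - cmod m" by (simp add: dist_norm e0_def)
    hence fb: "cmod (snd x) \<le> \<rho>" using norm_triangle_ineq2[of "snd x" m] by linarith
    have fa1: "cmod (fst x) < 1" "cmod (snd x) < 1" using fa fb \<rho>1 by linarith+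
    have Wl: "W (fst x) (snd x) \<in> l2" "W l m \<in> l2"
      using W[OF fa1] W[OF l m] Hb closed_subspace_l2 by blast+
    show "norm ((\<lambda>(a, b). l2norm (vsub (W a b) (W l m))) x) \<le> (cmod (fst x - l) + cmod (snd x - m)) * Y / r^3"
      using main[OF fa fb] Wl by (simp add: case_prod_beta)
  qed
  have lim: "((\<lambda>x. (cmod (fst x - l) + cmod (snd x - m)) * Y / r^3) \<longlongrightarrow> (cmod (l - l) + cmod (m - m)) * Y / r^3) (at (l, m) within U)"
    by (intro tendsto_intros tendsto_fst[OF tendsto_ident_at, of "(l,m)", simplified]
        tendsto_snd[OF tendsto_ident_at, of "(l,m)", simplified]) (use r0 in simp)
  hence lim0: "((\<lambda>x. (cmod (fst x - l) + cmod (snd x - m)) * Y / r^3) \<longlongrightarrow> 0) (at (l, m) within U)" by simp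
  show ?thesis by (rule Lim_null_comparison[OF ev lim0])
qed


lemma riesz:
  assumes H: "closed_subspace H"
    and add: "\<And>u v. u \<in> H \<Longrightarrow> v \<in> H \<Longrightarrow> \<Phi> (vadd u v) = \<Phi> u + \<Phi> v"
    and sc: "\<And>k v. v \<in> H \<Longrightarrow> \<Phi> (vsc k v) = cnj k * \<Phi> v"
    and bnd: "\<And>v. v \<in> H \<Longrightarrow> cmod (\<Phi> v) \<le> C * l2norm v"
  shows "\<exists>w\<in>H. \<forall>v\<in>H. ip w v = \<Phi> v"
proof (cases "\<forall>v\<in>H. \<Phi> v = 0")
  case True thus ?thesis using closed_subspace_vzero[OF H] by (intro bexI[of _ vzero]) auto
next
  case False
  then obtain v0 where v0: "v0 \<in> H" "\<Phi> v0 \<noteq> 0" by blast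
  have Hl: "v \<in> H \<Longrightarrow> v \<in> l2" for v using H closed_subspace_l2 by blast
  have sub: "v \<in> H \<Longrightarrow> u \<in> H \<Longrightarrow> \<Phi> (vsub v u) = \<Phi> v - \<Phi> u" for u v
    using add[of v "vsc (-1) u"] sc[of u "-1"] closed_subspace_vsc[OF H] by (simp add: vsub_eq)
  define N where "N = {v \<in> H. \<Phi> v = 0}"
  have NH: "v \<in> N \<Longrightarrow> v \<in> H" for v by (simp add: N_def)
  have subN: "subsp N" unfolding subsp_def
  proof (intro conjI ballI allI)
    show "N \<subseteq> l2" using NH Hl by blast
    have "\<Phi> vzero = 0" using sc[of vzero 0] closed_subspace_vzero[OF H]
      by (simp add: vsc_def vzero_def)
    thus "vzero \<in> N" using closed_subspace_vzero[OF H] by (simp add: N_def)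
    fix x y assume "x \<in> N" "y \<in> N"
    thus "vadd x y \<in> N" using add closed_subspace_vadd[OF H] by (simp add: N_def)
  next
    fix k x assume "x \<in> N"
    thus "vsc k x \<in> N" using sc closed_subspace_vsc[OF H] by (simp add: N_def)
  qed
  obtain p where p: "p \<in> l2" and pX: "\<exists>X. (\<forall>k. X k \<in> N) \<and> lconv X p" and po: "\<forall>m\<in>N. ip (vsub v0 p) m = 0"
    using projection[OF subN Hl[OF v0(1)]] by (elim bexE conjE)
  from pX obtain X where X0: "\<forall>k. X k \<in> N" and Xp: "lconv X p" by (elim exE conjE)
  have XN: "X k \<in> N" for k by (rule X0[rule_format])
  have XH: "X k \<in> H" for k using XN NH by blast
  have pH: "p \<in> H" using H XH p Xp unfolding closed_subspace_def lconv_def by blast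
  have "\<Phi> p = 0"
  proof -
    have "cmod (\<Phi> p) \<le> C * l2norm (vsub (X k) p)" for k
    proof -
      have "\<Phi> (vsub (X k) p) = - \<Phi> p" using sub[OF XH[of k] pH] XN[of k] by (simp add: N_def)
      moreover have "cmod (\<Phi> (vsub (X k) p)) \<le> C * l2norm (vsub (X k) p)"
        using bnd[OF closed_subspace_vsub[OF H XH[of k] pH]] .
      ultimately show ?thesis by simp
    qed
    moreover have "(\<lambda>k. C * l2norm (vsub (X k) p)) \<longlonglongrightarrow> C * 0"
      using Xp unfolding lconv_def by (intro tendsto_mult tendsto_const)
    ultimately have "cmod (\<Phi> p) \<le> C * 0" by (intro LIMSEQ_le_const) auto
    hence "cmod (\<Phi> p) \<le> 0" by simp
    thus ?thesis by simp
  qed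
  hence pN: "p \<in> N" using pH by (simp add: N_def)
  define z where "z = vsub v0 p"
  have zH: "z \<in> H" unfolding z_def using H v0(1) pH by (rule closed_subspace_vsub)
  have zl: "z \<in> l2" using Hl[OF zH] .
  have Phz: "\<Phi> z = \<Phi> v0" unfolding z_def using sub[OF v0(1) pH] pN by (simp add: N_def)
  hence Phz0: "\<Phi> z \<noteq> 0" using v0 by simp
  have zN: "\<forall>m\<in>N. ip z m = 0" using po by (simp add: z_def)
  have znz: "z \<noteq> vzero" using Phz0 sc[of vzero 0] closed_subspace_vzero[OF H] by (auto simp: vsc_def vzero_def)
  define nz where "nz = ip z z"
  have nz: "nz \<noteq> 0" using znz zl ip_self_zero by (auto simp: nz_def)
  define w where "w = vsc (\<Phi> z / nz) z"
  have wH: "w \<in> H" unfolding w_def using H zH by (rule closed_subspace_vsc)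
  have "ip w v = \<Phi> v" if v: "v \<in> H" for v
  proof -
    define u where "u = vsub (vsc (cnj (\<Phi> z)) v) (vsc (cnj (\<Phi> v)) z)"
    have uH: "u \<in> H" unfolding u_def using H v zH
      by (intro closed_subspace_vsub closed_subspace_vsc)
    have "\<Phi> u = \<Phi> z * \<Phi> v - \<Phi> v * \<Phi> z"
      unfolding u_def using sub closed_subspace_vsc[OF H] v zH sc by simp
    hence "u \<in> N" using uH by (simp add: N_def)
    hence "ip z u = 0" using zN by blast
    moreover have "ip z u = \<Phi> z * ip z v - \<Phi> v * nz"
      unfolding u_def nz_def using zl Hl[OF v] by (simp add: ip_vsub2 ip_vsc2)
    ultimately have "\<Phi> v = \<Phi> z * ip z v / nz" using nz by (simp add: field_simps)
    moreover have "ip w v = \<Phi> z / nz * ip z v" unfolding w_def using zl Hl[OF v] by (simp add: ip_vsc1)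
    ultimately show ?thesis by simp
  qed
  thus ?thesis using wH by blast
qed

context bql begin

definition gsel :: "complex \<Rightarrow> vec \<Rightarrow> vec \<times> vec" where
  "gsel c z = (THE a. a \<in> NP A c \<and> G1 a = z)"

lemma gsel: assumes "cmod c < 1" "z \<in> H1" shows "gsel c z \<in> NP A c" "G1 (gsel c z) = z"
  using theI'[OF core_unique[OF assms]] unfolding gsel_def by auto

lemma gsel_eq: assumes "cmod c < 1" "z \<in> H1" "a \<in> NP A c" "G1 a = z" shows "gsel c z = a"
  using NP_inj[OF assms(1) gsel(1)[OF assms(1,2)] assms(3)] gsel(2)[OF assms(1,2)] assms(4) by simp

lemma gsel_add: assumes "cmod c < 1" "z1 \<in> H1" "z2 \<in> H1"
  shows "gsel c (vadd z1 z2) = padd (gsel c z1) (gsel c z2)"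
proof -
  have s: "gsel c z1 \<in> sperp A" "gsel c z2 \<in> sperp A" using gsel assms by (auto simp: NP_iff)
  show ?thesis
    using closed_subspace_vadd[OF H1 assms(2,3)] NP_padd[OF gsel(1)[OF assms(1,2)] gsel(1)[OF assms(1,3)]]
      Gadd(1)[OF s] gsel(2) assms by (intro gsel_eq) auto
qed

lemma gsel_sc: assumes "cmod c < 1" "z \<in> H1"
  shows "gsel c (vsc k z) = psc k (gsel c z)"
proof -
  have s: "gsel c z \<in> sperp A" using gsel assms by (auto simp: NP_iff)
  show ?thesis
    using closed_subspace_vsc[OF H1 assms(2)] NP_psc[OF gsel(1)[OF assms]]
      Gsc(1)[OF s] gsel(2) assms by (intro gsel_eq) auto
qed

definition hd :: "complex \<Rightarrow> vec \<Rightarrow> vec" where "hd c z = fst (gsel c z)"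

lemma gsel_form: assumes "cmod c < 1" "z \<in> H1" shows "gsel c z = (hd c z, vsc c (hd c z))"
  using gsel(1)[OF assms] by (simp add: hd_def NP_iff prod_eq_iff)

lemma hd_l2: assumes "cmod c < 1" "z \<in> H1" shows "hd c z \<in> l2"
  using S_pl2 gsel(1)[OF assms] by (auto simp: hd_def NP_iff pl2_def)

lemma hd_add: "cmod c < 1 \<Longrightarrow> z1 \<in> H1 \<Longrightarrow> z2 \<in> H1 \<Longrightarrow> hd c (vadd z1 z2) = vadd (hd c z1) (hd c z2)"
  by (simp add: hd_def gsel_add padd_def)
lemma hd_sc: "cmod c < 1 \<Longrightarrow> z \<in> H1 \<Longrightarrow> hd c (vsc k z) = vsc k (hd c z)"
  by (simp add: hd_def gsel_sc psc_def)

lemma hd_bound: assumes "cmod c < 1" "z \<in> H1"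
  shows "(1 - (cmod c)^2) * (l2norm (hd c z))^2 \<le> (l2norm z)^2"
  using NP_lower[OF gsel(1)[OF assms]] gsel(2)[OF assms] by (simp add: hd_def)

lemma hd_bound2: assumes "cmod c < 1" "z \<in> H1"
  shows "l2norm (hd c z) \<le> l2norm z / sqrt (1 - (cmod c)^2)"
proof -
  have p: "0 < 1 - (cmod c)^2" using assms(1) by (simp add: power_less_one_iff abs_square_less_1)
  have "(sqrt (1 - (cmod c)^2) * l2norm (hd c z))^2 \<le> (l2norm z)^2"
    using hd_bound[OF assms] p by (simp add: power_mult_distrib)
  hence "sqrt (1 - (cmod c)^2) * l2norm (hd c z) \<le> l2norm z"
    by (rule power2_le_imp_le) (use assms H1 closed_subspace_l2 in auto)
  thus ?thesis using p by (simp add: field_simps)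
qed

lemma riesz_hd: assumes c: "cmod c < 1" and z: "z \<in> l2"
  shows "\<exists>w\<in>H1. \<forall>v\<in>H1. ip w v = ip z (hd c v)"
proof (rule riesz[OF H1])
  fix u v assume "u \<in> H1" "v \<in> H1"
  thus "ip z (hd c (vadd u v)) = ip z (hd c u) + ip z (hd c v)"
    using c z by (simp add: hd_add hd_l2 ip_vadd2)
next
  fix k v assume "v \<in> H1"
  thus "ip z (hd c (vsc k v)) = cnj k * ip z (hd c v)"
    using c z by (simp add: hd_sc hd_l2 ip_vsc2)
next
  fix v assume v: "v \<in> H1"
  have "cmod (ip z (hd c v)) \<le> l2norm z * l2norm (hd c v)" using z hd_l2[OF c v] by (rule cauchy_schwarz)
  also have "\<dots> \<le> l2norm z * (l2norm v / sqrt (1 - (cmod c)^2))"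
    using z by (intro mult_left_mono hd_bound2[OF c v]) simp
  finally show "cmod (ip z (hd c v)) \<le> (l2norm z / sqrt (1 - (cmod c)^2)) * l2norm v" by simp
qed

lemma hd_lip: assumes "cmod c < 1" "cmod c' < 1" "z \<in> H1"
  shows "(1 - cmod c) * l2norm (vsub (hd c z) (hd c' z)) \<le> cmod (c - c') * l2norm (hd c' z)"
  using NP_lip[OF gsel(1)[OF assms(1,3)] gsel(1)[OF assms(2,3)]] gsel(2) assms by (simp add: hd_def)

end

lemma snd_swp: "snd (swp a) = fst a" and fst_swp: "fst (swp a) = snd a" by (simp_all add: swp_def)

lemma Kloc_eq:
  assumes "closed_subspace (tgt Hp Hm p)" "w \<in> tgt Hp Hm p"
    "\<forall>v\<in>tgt Hp Hm p. ip w v = ip (phi T Gp Gm (ptbar q) y) (phi T Gp Gm (ptbar p) v)"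
  shows "Kloc T Hp Hm Gp Gm p q y = w"
  unfolding Kloc_def fsec_def phidag_def hat_def
proof (rule the_equality)
  show "w \<in> tgt Hp Hm p \<and> (\<forall>v\<in>tgt Hp Hm p. ip w v = ip (phi T Gp Gm (ptbar q) y) (phi T Gp Gm (ptbar p) v))"
    using assms by blast
next
  fix w' assume w': "w' \<in> tgt Hp Hm p \<and> (\<forall>v\<in>tgt Hp Hm p. ip w' v = ip (phi T Gp Gm (ptbar q) y) (phi T Gp Gm (ptbar p) v))"
  have d: "vsub w' w \<in> tgt Hp Hm p" using closed_subspace_vsub[OF assms(1)] w' assms(2) by blast
  have l: "w \<in> l2" "w' \<in> l2" using assms(1,2) w' closed_subspace_l2 by blast+
  have "\<forall>v\<in>tgt Hp Hm p. ip (vsub w' w) v = 0"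
  proof
    fix v assume v: "v \<in> tgt Hp Hm p"
    hence "v \<in> l2" using assms(1) closed_subspace_l2 by blast
    thus "ip (vsub w' w) v = 0" using l w' assms(3) v by (simp add: ip_vsub1)
  qed
  hence "vsub w' w = vzero" using ip_zero_all[OF assms(1) d] by blast
  thus "w' = w" by (simp add: vsub_eq_vzero)
qed

locale conc =
  fixes T :: "vec \<Rightarrow> vec" and Hp Hm :: "vec set" and Gp Gm :: "vec \<times> vec \<Rightarrow> vec" and B :: "complex \<Rightarrow> vec \<Rightarrow> vec"
  assumes quad: "boundary_quadruple T Hp Hm Gp Gm" and weyl: "weyl_function T Hp Hm Gp Gm B"
begin

lemma bqP: "bql (A_T T) Hp Hm Gp Gm" using quad by (simp add: bql_def bq_quad)
lemma bqM: "bql (swp ` A_T T) Hm Hp (Gm \<circ> swp) (Gp \<circ> swp)" using quad by (simp add: bql_def bq_quad bq_swp)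

sublocale P: bql "A_T T" Hp Hm Gp Gm by (rule bqP)
sublocale M: bql "swp ` A_T T" Hm Hp "Gm \<circ> swp" "Gp \<circ> swp" by (rule bqM)

lemma Nsp_Pl: "Nsp T (Pl, c) = NP (A_T T) c" by (simp add: Nsp_def NP_def)

lemma Nsp_Mi: "Nsp T (Mi, c) = swp ` NP (swp ` A_T T) c"
proof -
  have "a \<in> Nsp T (Mi, c) \<longleftrightarrow> a \<in> swp ` NP (swp ` A_T T) c" for a
  proof -
    have "a \<in> swp ` NP (swp ` A_T T) c \<longleftrightarrow> swp a \<in> NP (swp ` A_T T) c" by (rule mem_swp_image)
    also have "\<dots> \<longleftrightarrow> swp a \<in> sperp (swp ` A_T T) \<and> snd (swp a) = vsc c (fst (swp a))" by (rule M.NP_iff)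
    also have "\<dots> \<longleftrightarrow> a \<in> sperp (A_T T) \<and> fst a = vsc c (snd a)"
      by (simp add: sperp_swp mem_swp_image) (simp add: swp_def)
    also have "\<dots> \<longleftrightarrow> a \<in> Nsp T (Mi, c)"
      by (cases a) (auto simp: Nsp_def sperp_iff pl2_def)
    finally show ?thesis by simp
  qed
  thus ?thesis by blast
qed

lemma gam_Pl: "gam T Gp Gm (Pl, c) y = P.gsel c y"
  by (simp add: gam_def P.gsel_def Nsp_Pl)

lemma gam_Mi: assumes "cmod c < 1" "y \<in> Hm" shows "gam T Gp Gm (Mi, c) y = swp (M.gsel c y)"
  unfolding gam_def
proof (rule the_equality)
  show "swp (M.gsel c y) \<in> Nsp T (Mi, c) \<and> (case fst (Mi, c) of Pl \<Rightarrow> Gp (swp (M.gsel c y)) | Mi \<Rightarrow> Gm (swp (M.gsel c y))) = y"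
    using M.gsel[OF assms] by (simp add: Nsp_Mi mem_swp_image)
next
  fix a assume a: "a \<in> Nsp T (Mi, c) \<and> (case fst (Mi, c) of Pl \<Rightarrow> Gp a | Mi \<Rightarrow> Gm a) = y"
  hence "swp a \<in> NP (swp ` A_T T) c" "(Gm \<circ> swp) (swp a) = y" by (simp_all add: Nsp_Mi mem_swp_image)
  hence "M.gsel c y = swp a" using M.gsel_eq[OF assms] by blast
  thus "a = swp (M.gsel c y)" by simp
qed

lemma phi_Pl: "phi T Gp Gm (Pl, c) y = P.hd c y" by (simp add: phi_def gam_Pl P.hd_def)
lemma phi_Mi: "cmod c < 1 \<Longrightarrow> y \<in> Hm \<Longrightarrow> phi T Gp Gm (Mi, c) y = M.hd c y"
  by (simp add: phi_def gam_Mi M.hd_def snd_swp)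

lemma Bop: "cmod c < 1 \<Longrightarrow> x \<in> Hp \<Longrightarrow> B c x \<in> Hm"
  using weyl by (auto simp: weyl_function_def bounded_op_def)

lemma gPl: assumes c: "cmod c < 1" and y: "y \<in> Hp"
  shows "gam T Gp Gm (Pl, c) y = (P.hd c y, vsc c (P.hd c y))" "gam T Gp Gm (Pl, c) y \<in> sperp (A_T T)"
    "Gp (gam T Gp Gm (Pl, c) y) = y" "Gm (gam T Gp Gm (Pl, c) y) = B c y" "P.hd c y \<in> l2"
proof -
  show "gam T Gp Gm (Pl, c) y = (P.hd c y, vsc c (P.hd c y))" using P.gsel_form[OF assms] by (simp add: gam_Pl)
  show "gam T Gp Gm (Pl, c) y \<in> sperp (A_T T)" using P.gsel(1)[OF assms] by (simp add: gam_Pl P.NP_iff)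
  show g: "Gp (gam T Gp Gm (Pl, c) y) = y" using P.gsel(2)[OF assms] by (simp add: gam_Pl)
  have "gam T Gp Gm (Pl, c) y \<in> Nsp T (Pl, c)" using P.gsel(1)[OF assms] by (simp add: gam_Pl Nsp_Pl)
  thus "Gm (gam T Gp Gm (Pl, c) y) = B c y" using weyl c g by (auto simp: weyl_function_def)
  show "P.hd c y \<in> l2" by (rule P.hd_l2[OF assms])
qed

lemma gMi0: assumes c: "cmod c < 1" and y: "y \<in> Hm"
  shows "gam T Gp Gm (Mi, c) y = (vsc c (M.hd c y), M.hd c y)" "gam T Gp Gm (Mi, c) y \<in> sperp (A_T T)"
    "Gm (gam T Gp Gm (Mi, c) y) = y" "M.hd c y \<in> l2"
proof -
  show "gam T Gp Gm (Mi, c) y = (vsc c (M.hd c y), M.hd c y)" using M.gsel_form[OF assms] by (simp add: gam_Mi[OF assms]) (simp add: swp_def)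
  show "gam T Gp Gm (Mi, c) y \<in> sperp (A_T T)" using M.gsel(1)[OF assms]
    by (simp add: gam_Mi[OF assms] M.NP_iff sperp_swp mem_swp_image)
  show "Gm (gam T Gp Gm (Mi, c) y) = y" using M.gsel(2)[OF assms] by (simp add: gam_Mi[OF assms])
  show "M.hd c y \<in> l2" by (rule M.hd_l2[OF assms])
qed

lemma Badj_char: assumes m: "cmod m < 1" and y: "y \<in> Hm"
  shows "Gp (gam T Gp Gm (Mi, cnj m) y) \<in> Hp"
    "\<forall>x\<in>Hp. ip (B m x) y = ip x (Gp (gam T Gp Gm (Mi, cnj m) y))"
proof -
  have cm: "cmod (cnj m) < 1" using m by simp
  note g = gMi0[OF cm y]
  show "Gp (gam T Gp Gm (Mi, cnj m) y) \<in> Hp" using P.Gin(1)[OF g(2)] .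
  show "\<forall>x\<in>Hp. ip (B m x) y = ip x (Gp (gam T Gp Gm (Mi, cnj m) y))"
  proof
    fix x assume x: "x \<in> Hp"
    note h = gPl[OF m x]
    have "sform (gam T Gp Gm (Pl, m) x) (gam T Gp Gm (Mi, cnj m) y) = 0"
      unfolding h(1) g(1) sform_def using h(5) g(4) by (simp add: ip_vsc1 ip_vsc2)
    moreover have "sform (gam T Gp Gm (Pl, m) x) (gam T Gp Gm (Mi, cnj m) y)
       = \<i> * ip x (Gp (gam T Gp Gm (Mi, cnj m) y)) - \<i> * ip (B m x) y"
      using P.green[OF h(2) g(2)] h(3,4) g(3) by simp
    ultimately show "ip (B m x) y = ip x (Gp (gam T Gp Gm (Mi, cnj m) y))" by simp
  qed
qed

lemma opadj_eq: assumes m: "cmod m < 1" and y: "y \<in> Hm"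
  shows "opadj Hp (B m) y = Gp (gam T Gp Gm (Mi, cnj m) y)"
  unfolding opadj_def
proof (rule the_equality)
  show "Gp (gam T Gp Gm (Mi, cnj m) y) \<in> Hp \<and> (\<forall>x'\<in>Hp. ip (B m x') y = ip x' (Gp (gam T Gp Gm (Mi, cnj m) y)))"
    using Badj_char[OF assms] by blast
next
  fix x assume x: "x \<in> Hp \<and> (\<forall>x'\<in>Hp. ip (B m x') y = ip x' x)"
  define g where "g = Gp (gam T Gp Gm (Mi, cnj m) y)"
  have gH: "g \<in> Hp" and gc: "\<forall>x'\<in>Hp. ip (B m x') y = ip x' g" using Badj_char[OF assms] by (auto simp: g_def)
  have d: "vsub x g \<in> Hp" using closed_subspace_vsub[OF P.H1] x gH by blast
  have "\<forall>v\<in>Hp. ip (vsub x g) v = 0"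
  proof
    fix v assume v: "v \<in> Hp"
    have l: "x \<in> l2" "g \<in> l2" "v \<in> l2" using x gH v P.H1 closed_subspace_l2 by blast+
    have "ip v x = ip v g" using x gc v by simp
    hence "cnj (ip x v) = cnj (ip g v)" using l by (simp add: ip_cnj[of x v] ip_cnj[of g v])
    thus "ip (vsub x g) v = 0" using l by (simp add: ip_vsub1)
  qed
  hence "vsub x g = vzero" using ip_zero_all[OF P.H1 d] by blast
  thus "x = g" by (simp add: vsub_eq_vzero g_def[symmetric])
qed

lemma gMi: assumes c: "cmod c < 1" and y: "y \<in> Hm"
  shows "Gp (gam T Gp Gm (Mi, c) y) = opadj Hp (B (cnj c)) y" "opadj Hp (B (cnj c)) y \<in> Hp"
    "\<forall>x\<in>Hp. ip (B (cnj c) x) y = ip x (opadj Hp (B (cnj c)) y)"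
proof -
  have cm: "cmod (cnj c) < 1" using c by simp
  show "Gp (gam T Gp Gm (Mi, c) y) = opadj Hp (B (cnj c)) y" using opadj_eq[OF cm y] by simp
  thus "opadj Hp (B (cnj c)) y \<in> Hp" "\<forall>x\<in>Hp. ip (B (cnj c) x) y = ip x (opadj Hp (B (cnj c)) y)"
    using Badj_char[OF cm y] by simp_all
qed

end

lemma tgt_Pl: "tgt Hp Hm (Pl, l) = Hm" and tgt_Mi: "tgt Hp Hm (Mi, l) = Hp" by (simp_all add: tgt_def)
lemma ptbar_Pl: "ptbar (Pl, l) = (Mi, cnj l)" and ptbar_Mi: "ptbar (Mi, l) = (Pl, cnj l)"
  by (simp_all add: ptbar_def)

lemma one_minus_nz: "cmod l < 1 \<Longrightarrow> cmod m < 1 \<Longrightarrow> 1 - l * cnj m \<noteq> 0"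
proof
  assume "cmod l < 1" "cmod m < 1" "1 - l * cnj m = 0"
  hence "l * cnj m = 1" by simp
  hence "cmod l * cmod m = 1" by (metis complex_mod_cnj norm_mult norm_one)
  moreover have "cmod l * cmod m < 1" using \<open>cmod l < 1\<close> \<open>cmod m < 1\<close>
    by (metis mult_le_one less_le_not_le norm_ge_zero mult_strict_mono' mult_1 less_imp_le)
  ultimately show False by simp
qed

lemma i_cancel: "\<i> * a - \<i> * b = \<i> * c - \<i> * d \<Longrightarrow> a - b = c - d"
proof -
  assume "\<i> * a - \<i> * b = \<i> * c - \<i> * d"
  hence "\<i> * (a - b) = \<i> * (c - d)" by (simp add: right_diff_distrib)
  thus ?thesis by simp
qed

lemma ip_vsc_both: "x \<in> l2 \<Longrightarrow> y \<in> l2 \<Longrightarrow> ip (vsc a x) (vsc b y) = a * cnj b * ip x y"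
  by (simp add: ip_vsc1 ip_vsc2)

context conc begin

lemma K_PP: assumes l: "cmod l < 1" and m: "cmod m < 1" and y: "y \<in> Hm"
  shows "Kloc T Hp Hm Gp Gm (Pl, l) (Pl, m) y = vsc (1 / (1 - l * cnj m)) (vsub y (B l (opadj Hp (B m) y)))"
proof (rule Kloc_eq)
  have cl: "cmod (cnj l) < 1" and cm: "cmod (cnj m) < 1" using l m by auto
  define ys where "ys = opadj Hp (B m) y"
  have ysH: "ys \<in> Hp" using gMi(2)[OF cm y] by (simp add: ys_def)
  have yl: "y \<in> l2" using y P.H2 closed_subspace_l2 by blast
  have Byl: "B l ys \<in> Hm" using Bop[OF l ysH] .
  show "closed_subspace (tgt Hp Hm (Pl, l))" by (simp add: tgt_Pl P.H2)
  show "vsc (1 / (1 - l * cnj m)) (vsub y (B l (opadj Hp (B m) y))) \<in> tgt Hp Hm (Pl, l)"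
    unfolding tgt_Pl ys_def[symmetric] using P.H2 y Byl by (intro closed_subspace_vsc closed_subspace_vsub)
  show "\<forall>v\<in>tgt Hp Hm (Pl, l). ip (vsc (1 / (1 - l * cnj m)) (vsub y (B l (opadj Hp (B m) y)))) v =
        ip (phi T Gp Gm (ptbar (Pl, m)) y) (phi T Gp Gm (ptbar (Pl, l)) v)"
  proof
    fix v assume "v \<in> tgt Hp Hm (Pl, l)"
    hence v: "v \<in> Hm" by (simp add: tgt_Pl)
    have vl: "v \<in> l2" using v P.H2 closed_subspace_l2 by blast
    have Bl: "B l ys \<in> l2" using Byl P.H2 closed_subspace_l2 by blast
    note a = gMi0[OF cm y] and a' = gMi0[OF cl v]
    define x where "x = M.hd (cnj m) y"
    define x' where "x' = M.hd (cnj l) v"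
    have e1: "sform (gam T Gp Gm (Mi, cnj m) y) (gam T Gp Gm (Mi, cnj l) v) = \<i> * (cnj m * l * ip x x') - \<i> * ip x x'"
      unfolding a(1) a'(1) sform_def x_def x'_def using a(4) a'(4) by (simp add: ip_vsc_both)
    have e2: "sform (gam T Gp Gm (Mi, cnj m) y) (gam T Gp Gm (Mi, cnj l) v) = \<i> * ip ys (opadj Hp (B l) v) - \<i> * ip y v"
      using P.green[OF a(2) a'(2)] a(3) a'(3) gMi(1)[OF cm y] gMi(1)[OF cl v] by (simp add: ys_def)
    have e3: "ip ys (opadj Hp (B l) v) = ip (B l ys) v" using gMi(3)[OF cl v] ysH by simp
    have "\<i> * (cnj m * l * ip x x') - \<i> * ip x x' = \<i> * ip (B l ys) v - \<i> * ip y v"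
      using e1 e2 e3 by simp
    hence eq: "cnj m * l * ip x x' - ip x x' = ip (B l ys) v - ip y v" by (rule i_cancel)
    have nz: "1 - l * cnj m \<noteq> 0" using one_minus_nz[OF l m] .
    have "ip (vsc (1 / (1 - l * cnj m)) (vsub y (B l ys))) v = (ip y v - ip (B l ys) v) / (1 - l * cnj m)"
      using yl Bl vl by (simp add: ip_vsc1 ip_vsub1)
    also have "\<dots> = ip x x'" using eq nz by (simp add: field_simps)
    finally show "ip (vsc (1 / (1 - l * cnj m)) (vsub y (B l (opadj Hp (B m) y)))) v =
        ip (phi T Gp Gm (ptbar (Pl, m)) y) (phi T Gp Gm (ptbar (Pl, l)) v)"
      by (simp add: ptbar_Pl phi_Mi[OF cm y] phi_Mi[OF cl v] x_def x'_def ys_def)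
  qed
qed


lemma K_MM: assumes l: "cmod l < 1" and m: "cmod m < 1" and y: "y \<in> Hp"
  shows "Kloc T Hp Hm Gp Gm (Mi, l) (Mi, m) y =
          vsc (1 / (1 - l * cnj m)) (vsub y (opadj Hp (B (cnj l)) (B (cnj m) y)))"
proof (rule Kloc_eq)
  have cl: "cmod (cnj l) < 1" and cm: "cmod (cnj m) < 1" using l m by auto
  have Bmy: "B (cnj m) y \<in> Hm" using Bop[OF cm y] .
  define Z where "Z = opadj Hp (B (cnj l)) (B (cnj m) y)"
  have ZH: "Z \<in> Hp" using gMi(2)[OF l Bmy] by (simp add: Z_def)
  have yl: "y \<in> l2" using y P.H1 closed_subspace_l2 by blast
  have Zl: "Z \<in> l2" using ZH P.H1 closed_subspace_l2 by blast
  show "closed_subspace (tgt Hp Hm (Mi, l))" by (simp add: tgt_Mi P.H1)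
  show "vsc (1 / (1 - l * cnj m)) (vsub y (opadj Hp (B (cnj l)) (B (cnj m) y))) \<in> tgt Hp Hm (Mi, l)"
    unfolding tgt_Mi Z_def[symmetric] using P.H1 y ZH by (intro closed_subspace_vsc closed_subspace_vsub)
  show "\<forall>v\<in>tgt Hp Hm (Mi, l). ip (vsc (1 / (1 - l * cnj m)) (vsub y (opadj Hp (B (cnj l)) (B (cnj m) y)))) v =
        ip (phi T Gp Gm (ptbar (Mi, m)) y) (phi T Gp Gm (ptbar (Mi, l)) v)"
  proof
    fix v assume "v \<in> tgt Hp Hm (Mi, l)"
    hence v: "v \<in> Hp" by (simp add: tgt_Mi)
    have vl: "v \<in> l2" using v P.H1 closed_subspace_l2 by blast
    note a = gPl[OF cm y] and a' = gPl[OF cl v]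
    define x where "x = P.hd (cnj m) y"
    define x' where "x' = P.hd (cnj l) v"
    have e1: "sform (gam T Gp Gm (Pl, cnj m) y) (gam T Gp Gm (Pl, cnj l) v) = \<i> * ip x x' - \<i> * (cnj m * l * ip x x')"
      unfolding a(1) a'(1) sform_def x_def x'_def using a(5) a'(5) by (simp add: ip_vsc_both)
    have e2: "sform (gam T Gp Gm (Pl, cnj m) y) (gam T Gp Gm (Pl, cnj l) v) = \<i> * ip y v - \<i> * ip (B (cnj m) y) (B (cnj l) v)"
      using P.green[OF a(2) a'(2)] a(3,4) a'(3,4) by simp
    have Bl: "B (cnj m) y \<in> l2" "B (cnj l) v \<in> l2" using Bmy Bop[OF cl v] P.H2 closed_subspace_l2 by blast+
    have "ip (B (cnj l) v) (B (cnj m) y) = ip v Z" using gMi(3)[OF l Bmy] v by (simp add: Z_def)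
    hence e3: "ip (B (cnj m) y) (B (cnj l) v) = ip Z v"
      using Bl vl Zl by (metis ip_cnj)
    have "\<i> * ip x x' - \<i> * (cnj m * l * ip x x') = \<i> * ip y v - \<i> * ip Z v"
      using e1 e2 e3 by simp
    hence eq: "ip x x' - cnj m * l * ip x x' = ip y v - ip Z v" by (rule i_cancel)
    have nz: "1 - l * cnj m \<noteq> 0" using one_minus_nz[OF l m] .
    have "ip (vsc (1 / (1 - l * cnj m)) (vsub y Z)) v = (ip y v - ip Z v) / (1 - l * cnj m)"
      using yl Zl vl by (simp add: ip_vsc1 ip_vsub1)
    also have "\<dots> = ip x x'" using eq nz by (simp add: field_simps)
    finally show "ip (vsc (1 / (1 - l * cnj m)) (vsub y (opadj Hp (B (cnj l)) (B (cnj m) y)))) v =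
        ip (phi T Gp Gm (ptbar (Mi, m)) y) (phi T Gp Gm (ptbar (Mi, l)) v)"
      by (simp add: ptbar_Mi phi_Pl x_def x'_def Z_def)
  qed
qed

lemma K_PM: assumes l: "cmod l < 1" and m: "cmod m < 1" and lm: "l \<noteq> cnj m" and y: "y \<in> Hp"
  shows "Kloc T Hp Hm Gp Gm (Pl, l) (Mi, m) y = vsc (1 / (l - cnj m)) (vsub (B l y) (B (cnj m) y))"
proof (rule Kloc_eq)
  have cl: "cmod (cnj l) < 1" and cm: "cmod (cnj m) < 1" using l m by auto
  have Bly: "B l y \<in> Hm" and Bmy: "B (cnj m) y \<in> Hm" using Bop[OF l y] Bop[OF cm y] by auto
  have Bl: "B l y \<in> l2" "B (cnj m) y \<in> l2" using Bly Bmy P.H2 closed_subspace_l2 by blast+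
  have yl: "y \<in> l2" using y P.H1 closed_subspace_l2 by blast
  show "closed_subspace (tgt Hp Hm (Pl, l))" by (simp add: tgt_Pl P.H2)
  show "vsc (1 / (l - cnj m)) (vsub (B l y) (B (cnj m) y)) \<in> tgt Hp Hm (Pl, l)"
    unfolding tgt_Pl using P.H2 Bly Bmy by (intro closed_subspace_vsc closed_subspace_vsub)
  show "\<forall>v\<in>tgt Hp Hm (Pl, l). ip (vsc (1 / (l - cnj m)) (vsub (B l y) (B (cnj m) y))) v =
        ip (phi T Gp Gm (ptbar (Mi, m)) y) (phi T Gp Gm (ptbar (Pl, l)) v)"
  proof
    fix v assume "v \<in> tgt Hp Hm (Pl, l)"
    hence v: "v \<in> Hm" by (simp add: tgt_Pl)
    have vl: "v \<in> l2" using v P.H2 closed_subspace_l2 by blast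
    note a = gPl[OF cm y] and a' = gMi0[OF cl v]
    define x where "x = P.hd (cnj m) y"
    define x' where "x' = M.hd (cnj l) v"
    have e1: "sform (gam T Gp Gm (Pl, cnj m) y) (gam T Gp Gm (Mi, cnj l) v) = \<i> * (l * ip x x') - \<i> * (cnj m * ip x x')"
      unfolding a(1) a'(1) sform_def x_def x'_def using a(5) a'(4) by (simp add: ip_vsc1 ip_vsc2)
    have e2: "sform (gam T Gp Gm (Pl, cnj m) y) (gam T Gp Gm (Mi, cnj l) v) = \<i> * ip y (opadj Hp (B l) v) - \<i> * ip (B (cnj m) y) v"
      using P.green[OF a(2) a'(2)] a(3,4) a'(3) gMi(1)[OF cl v] by simp
    have e3: "ip y (opadj Hp (B l) v) = ip (B l y) v" using gMi(3)[OF cl v] y by simp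
    have "\<i> * (l * ip x x') - \<i> * (cnj m * ip x x') = \<i> * ip (B l y) v - \<i> * ip (B (cnj m) y) v"
      using e1 e2 e3 by simp
    hence eq: "l * ip x x' - cnj m * ip x x' = ip (B l y) v - ip (B (cnj m) y) v" by (rule i_cancel)
    have nz: "l - cnj m \<noteq> 0" using lm by simp
    have "ip (vsc (1 / (l - cnj m)) (vsub (B l y) (B (cnj m) y))) v = (ip (B l y) v - ip (B (cnj m) y) v) / (l - cnj m)"
      using Bl vl by (simp add: ip_vsc1 ip_vsub1)
    also have "\<dots> = ip x x'" using eq nz by (simp add: field_simps)
    finally show "ip (vsc (1 / (l - cnj m)) (vsub (B l y) (B (cnj m) y))) v =
        ip (phi T Gp Gm (ptbar (Mi, m)) y) (phi T Gp Gm (ptbar (Pl, l)) v)"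
      by (simp add: ptbar_Mi ptbar_Pl phi_Pl phi_Mi[OF cl v] x_def x'_def)
  qed
qed

lemma K_MP: assumes l: "cmod l < 1" and m: "cmod m < 1" and lm: "l \<noteq> cnj m" and y: "y \<in> Hm"
  shows "Kloc T Hp Hm Gp Gm (Mi, l) (Pl, m) y =
          vsc (1 / (l - cnj m)) (vsub (opadj Hp (B (cnj l)) y) (opadj Hp (B m) y))"
proof (rule Kloc_eq)
  have cl: "cmod (cnj l) < 1" and cm: "cmod (cnj m) < 1" using l m by auto
  define Y1 where "Y1 = opadj Hp (B (cnj l)) y"
  define Y2 where "Y2 = opadj Hp (B m) y"
  have Y1H: "Y1 \<in> Hp" using gMi(2)[OF l y] by (simp add: Y1_def)
  have Y2H: "Y2 \<in> Hp" using gMi(2)[OF cm y] by (simp add: Y2_def)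
  have Yl: "Y1 \<in> l2" "Y2 \<in> l2" using Y1H Y2H P.H1 closed_subspace_l2 by blast+
  have yl: "y \<in> l2" using y P.H2 closed_subspace_l2 by blast
  show "closed_subspace (tgt Hp Hm (Mi, l))" by (simp add: tgt_Mi P.H1)
  show "vsc (1 / (l - cnj m)) (vsub (opadj Hp (B (cnj l)) y) (opadj Hp (B m) y)) \<in> tgt Hp Hm (Mi, l)"
    unfolding tgt_Mi Y1_def[symmetric] Y2_def[symmetric] using P.H1 Y1H Y2H by (intro closed_subspace_vsc closed_subspace_vsub)
  show "\<forall>v\<in>tgt Hp Hm (Mi, l). ip (vsc (1 / (l - cnj m)) (vsub (opadj Hp (B (cnj l)) y) (opadj Hp (B m) y))) v =
        ip (phi T Gp Gm (ptbar (Pl, m)) y) (phi T Gp Gm (ptbar (Mi, l)) v)"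
  proof
    fix v assume "v \<in> tgt Hp Hm (Mi, l)"
    hence v: "v \<in> Hp" by (simp add: tgt_Mi)
    have vl: "v \<in> l2" using v P.H1 closed_subspace_l2 by blast
    note a = gMi0[OF cm y] and a' = gPl[OF cl v]
    define x where "x = M.hd (cnj m) y"
    define x' where "x' = P.hd (cnj l) v"
    have e1: "sform (gam T Gp Gm (Mi, cnj m) y) (gam T Gp Gm (Pl, cnj l) v) = \<i> * (cnj m * ip x x') - \<i> * (l * ip x x')"
      unfolding a(1) a'(1) sform_def x_def x'_def using a(4) a'(5) by (simp add: ip_vsc1 ip_vsc2)
    have e2: "sform (gam T Gp Gm (Mi, cnj m) y) (gam T Gp Gm (Pl, cnj l) v) = \<i> * ip Y2 v - \<i> * ip y (B (cnj l) v)"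
      using P.green[OF a(2) a'(2)] a(3) a'(3,4) gMi(1)[OF cm y] by (simp add: Y2_def)
    have Bl: "B (cnj l) v \<in> l2" using Bop[OF cl v] P.H2 closed_subspace_l2 by blast
    have "ip (B (cnj l) v) y = ip v Y1" using gMi(3)[OF l y] v by (simp add: Y1_def)
    hence e3: "ip y (B (cnj l) v) = ip Y1 v" using Bl yl vl Yl by (metis ip_cnj)
    have "\<i> * (cnj m * ip x x') - \<i> * (l * ip x x') = \<i> * ip Y2 v - \<i> * ip Y1 v"
      using e1 e2 e3 by simp
    hence eq: "cnj m * ip x x' - l * ip x x' = ip Y2 v - ip Y1 v" by (rule i_cancel)
    have nz: "l - cnj m \<noteq> 0" using lm by simp
    have "ip (vsc (1 / (l - cnj m)) (vsub Y1 Y2)) v = (ip Y1 v - ip Y2 v) / (l - cnj m)"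
      using Yl vl by (simp add: ip_vsc1 ip_vsub1)
    also have "\<dots> = ip x x'" using eq nz by (simp add: field_simps)
    finally show "ip (vsc (1 / (l - cnj m)) (vsub (opadj Hp (B (cnj l)) y) (opadj Hp (B m) y))) v =
        ip (phi T Gp Gm (ptbar (Pl, m)) y) (phi T Gp Gm (ptbar (Mi, l)) v)"
      by (simp add: ptbar_Mi ptbar_Pl phi_Pl phi_Mi[OF cm y] x_def x'_def Y1_def Y2_def)
  qed
qed

end

context conc begin

lemma K_Pl_char: assumes a: "cmod a < 1" and z: "phi T Gp Gm (ptbar q) y \<in> l2"
  shows "Kloc T Hp Hm Gp Gm (Pl, a) q y \<in> Hm \<and>
         (\<forall>v\<in>Hm. ip (Kloc T Hp Hm Gp Gm (Pl, a) q y) v = ip (phi T Gp Gm (ptbar q) y) (M.hd (cnj a) v))"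
proof -
  have ca: "cmod (cnj a) < 1" using a by simp
  obtain w where w: "w \<in> Hm" "\<forall>v\<in>Hm. ip w v = ip (phi T Gp Gm (ptbar q) y) (M.hd (cnj a) v)"
    using M.riesz_hd[OF ca z] by blast
  have "Kloc T Hp Hm Gp Gm (Pl, a) q y = w"
  proof (rule Kloc_eq)
    show "closed_subspace (tgt Hp Hm (Pl, a))" by (simp add: tgt_Pl P.H2)
    show "w \<in> tgt Hp Hm (Pl, a)" using w by (simp add: tgt_Pl)
    show "\<forall>v\<in>tgt Hp Hm (Pl, a). ip w v = ip (phi T Gp Gm (ptbar q) y) (phi T Gp Gm (ptbar (Pl, a)) v)"
      using w by (simp add: tgt_Pl ptbar_Pl phi_Mi[OF ca])
  qed
  thus ?thesis using w by simp
qed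

lemma K_Mi_char: assumes a: "cmod a < 1" and z: "phi T Gp Gm (ptbar q) y \<in> l2"
  shows "Kloc T Hp Hm Gp Gm (Mi, a) q y \<in> Hp \<and>
         (\<forall>v\<in>Hp. ip (Kloc T Hp Hm Gp Gm (Mi, a) q y) v = ip (phi T Gp Gm (ptbar q) y) (P.hd (cnj a) v))"
proof -
  have ca: "cmod (cnj a) < 1" using a by simp
  obtain w where w: "w \<in> Hp" "\<forall>v\<in>Hp. ip w v = ip (phi T Gp Gm (ptbar q) y) (P.hd (cnj a) v)"
    using P.riesz_hd[OF ca z] by blast
  have "Kloc T Hp Hm Gp Gm (Mi, a) q y = w"
  proof (rule Kloc_eq)
    show "closed_subspace (tgt Hp Hm (Mi, a))" by (simp add: tgt_Mi P.H1)
    show "w \<in> tgt Hp Hm (Mi, a)" using w by (simp add: tgt_Mi)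
    show "\<forall>v\<in>tgt Hp Hm (Mi, a). ip w v = ip (phi T Gp Gm (ptbar q) y) (phi T Gp Gm (ptbar (Mi, a)) v)"
      using w by (simp add: tgt_Mi ptbar_Mi phi_Pl)
  qed
  thus ?thesis using w by simp
qed

lemma lim_PM: assumes l: "cmod l < 1" and m: "cmod m < 1" and y: "y \<in> Hp"
  shows "((\<lambda>(a, b). l2norm (vsub (vsc (1 / (a - cnj b)) (vsub (B a y) (B (cnj b) y)))
                                 (Kloc T Hp Hm Gp Gm (Pl, l) (Mi, m) y)))
          \<longlongrightarrow> 0) (at (l, m) within {(a, b). cmod a < 1 \<and> cmod b < 1 \<and> a \<noteq> cnj b})"
proof -
  define W where "W a b = Kloc T Hp Hm Gp Gm (Pl, a) (Mi, b) y" for a b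
  have yl: "y \<in> l2" using y P.H1 closed_subspace_l2 by blast
  have kc: "((\<lambda>(a, b). l2norm (vsub (W a b) (W l m))) \<longlongrightarrow> 0)
      (at (l, m) within {(a, b). cmod a < 1 \<and> cmod b < 1 \<and> a \<noteq> cnj b})"
  proof (rule kernel_cont[where F = "P.hd" and G = "M.hd" and Hb = Hm])
    show "closed_subspace Hm" by (rule P.H2)
    show "y \<in> l2" by (rule yl)
    show "\<And>c. cmod c < 1 \<Longrightarrow> P.hd c y \<in> l2 \<and> (1 - (cmod c)\<^sup>2) * (l2norm (P.hd c y))\<^sup>2 \<le> (l2norm y)\<^sup>2"
      using P.hd_l2 P.hd_bound y by blast
    show "\<And>c c'. cmod c < 1 \<Longrightarrow> cmod c' < 1 \<Longrightarrow>
        (1 - cmod c) * l2norm (vsub (P.hd c y) (P.hd c' y)) \<le> cmod (c - c') * l2norm (P.hd c' y)"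
      using P.hd_lip y by blast
    show "\<And>c v. cmod c < 1 \<Longrightarrow> v \<in> Hm \<Longrightarrow> M.hd c v \<in> l2 \<and> (1 - (cmod c)\<^sup>2) * (l2norm (M.hd c v))\<^sup>2 \<le> (l2norm v)\<^sup>2"
      using M.hd_l2 M.hd_bound by blast
    show "\<And>c c' v. cmod c < 1 \<Longrightarrow> cmod c' < 1 \<Longrightarrow> v \<in> Hm \<Longrightarrow>
        (1 - cmod c) * l2norm (vsub (M.hd c v) (M.hd c' v)) \<le> cmod (c - c') * l2norm (M.hd c' v)"
      using M.hd_lip by blast
    show "\<And>a b. cmod a < 1 \<Longrightarrow> cmod b < 1 \<Longrightarrow> W a b \<in> Hm \<and> (\<forall>v\<in>Hm. ip (W a b) v = ip (P.hd (cnj b) y) (M.hd (cnj a) v))"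
    proof -
      fix a b :: complex assume a: "cmod a < 1" and b: "cmod b < 1"
      have cb: "cmod (cnj b) < 1" using b by simp
      have z: "phi T Gp Gm (ptbar (Mi, b)) y \<in> l2" using P.hd_l2[OF cb y] by (simp add: ptbar_Mi phi_Pl)
      show "W a b \<in> Hm \<and> (\<forall>v\<in>Hm. ip (W a b) v = ip (P.hd (cnj b) y) (M.hd (cnj a) v))"
        using K_Pl_char[OF a z] by (simp add: W_def ptbar_Mi phi_Pl)
    qed
  qed (rule l, rule m)
  have ev: "eventually (\<lambda>x. (\<lambda>(a, b). l2norm (vsub (W a b) (W l m))) x =
       (\<lambda>(a, b). l2norm (vsub (vsc (1 / (a - cnj b)) (vsub (B a y) (B (cnj b) y)))
                                 (Kloc T Hp Hm Gp Gm (Pl, l) (Mi, m) y))) x)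
      (at (l, m) within {(a, b). cmod a < 1 \<and> cmod b < 1 \<and> a \<noteq> cnj b})"
    unfolding eventually_at_filter
  proof (rule always_eventually, intro allI impI)
    fix x :: "complex \<times> complex" assume "x \<in> {(a, b). cmod a < 1 \<and> cmod b < 1 \<and> a \<noteq> cnj b}"
    then obtain a b where x: "x = (a, b)" "cmod a < 1" "cmod b < 1" "a \<noteq> cnj b" by auto
    show "(\<lambda>(a, b). l2norm (vsub (W a b) (W l m))) x =
       (\<lambda>(a, b). l2norm (vsub (vsc (1 / (a - cnj b)) (vsub (B a y) (B (cnj b) y)))
                                 (Kloc T Hp Hm Gp Gm (Pl, l) (Mi, m) y))) x"
      using K_PM[OF x(2,3,4) y] by (simp add: x(1) W_def)
  qed
  show ?thesis using tendsto_cong[OF ev] kc by simp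
qed

lemma lim_MP: assumes l: "cmod l < 1" and m: "cmod m < 1" and y: "y \<in> Hm"
  shows "((\<lambda>(a, b). l2norm (vsub (vsc (1 / (a - cnj b))
                                       (vsub (opadj Hp (B (cnj a)) y) (opadj Hp (B b) y)))
                                 (Kloc T Hp Hm Gp Gm (Mi, l) (Pl, m) y)))
          \<longlongrightarrow> 0) (at (l, m) within {(a, b). cmod a < 1 \<and> cmod b < 1 \<and> a \<noteq> cnj b})"
proof -
  define W where "W a b = Kloc T Hp Hm Gp Gm (Mi, a) (Pl, b) y" for a b
  have yl: "y \<in> l2" using y P.H2 closed_subspace_l2 by blast
  have kc: "((\<lambda>(a, b). l2norm (vsub (W a b) (W l m))) \<longlongrightarrow> 0)
      (at (l, m) within {(a, b). cmod a < 1 \<and> cmod b < 1 \<and> a \<noteq> cnj b})"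
  proof (rule kernel_cont[where F = "M.hd" and G = "P.hd" and Hb = Hp])
    show "closed_subspace Hp" by (rule P.H1)
    show "y \<in> l2" by (rule yl)
    show "\<And>c. cmod c < 1 \<Longrightarrow> M.hd c y \<in> l2 \<and> (1 - (cmod c)\<^sup>2) * (l2norm (M.hd c y))\<^sup>2 \<le> (l2norm y)\<^sup>2"
      using M.hd_l2 M.hd_bound y by blast
    show "\<And>c c'. cmod c < 1 \<Longrightarrow> cmod c' < 1 \<Longrightarrow>
        (1 - cmod c) * l2norm (vsub (M.hd c y) (M.hd c' y)) \<le> cmod (c - c') * l2norm (M.hd c' y)"
      using M.hd_lip y by blast
    show "\<And>c v. cmod c < 1 \<Longrightarrow> v \<in> Hp \<Longrightarrow> P.hd c v \<in> l2 \<and> (1 - (cmod c)\<^sup>2) * (l2norm (P.hd c v))\<^sup>2 \<le> (l2norm v)\<^sup>2"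
      using P.hd_l2 P.hd_bound by blast
    show "\<And>c c' v. cmod c < 1 \<Longrightarrow> cmod c' < 1 \<Longrightarrow> v \<in> Hp \<Longrightarrow>
        (1 - cmod c) * l2norm (vsub (P.hd c v) (P.hd c' v)) \<le> cmod (c - c') * l2norm (P.hd c' v)"
      using P.hd_lip by blast
    show "\<And>a b. cmod a < 1 \<Longrightarrow> cmod b < 1 \<Longrightarrow> W a b \<in> Hp \<and> (\<forall>v\<in>Hp. ip (W a b) v = ip (M.hd (cnj b) y) (P.hd (cnj a) v))"
    proof -
      fix a b :: complex assume a: "cmod a < 1" and b: "cmod b < 1"
      have cb: "cmod (cnj b) < 1" using b by simp
      have z: "phi T Gp Gm (ptbar (Pl, b)) y \<in> l2" using M.hd_l2[OF cb y] by (simp add: ptbar_Pl phi_Mi[OF cb y])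
      show "W a b \<in> Hp \<and> (\<forall>v\<in>Hp. ip (W a b) v = ip (M.hd (cnj b) y) (P.hd (cnj a) v))"
        using K_Mi_char[OF a z] by (simp add: W_def ptbar_Pl phi_Mi[OF cb y])
    qed
  qed (rule l, rule m)
  have ev: "eventually (\<lambda>x. (\<lambda>(a, b). l2norm (vsub (W a b) (W l m))) x =
       (\<lambda>(a, b). l2norm (vsub (vsc (1 / (a - cnj b))
                                       (vsub (opadj Hp (B (cnj a)) y) (opadj Hp (B b) y)))
                                 (Kloc T Hp Hm Gp Gm (Mi, l) (Pl, m) y))) x)
      (at (l, m) within {(a, b). cmod a < 1 \<and> cmod b < 1 \<and> a \<noteq> cnj b})"
    unfolding eventually_at_filter
  proof (rule always_eventually, intro allI impI)
    fix x :: "complex \<times> complex" assume "x \<in> {(a, b). cmod a < 1 \<and> cmod b < 1 \<and> a \<noteq> cnj b}"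
    then obtain a b where x: "x = (a, b)" "cmod a < 1" "cmod b < 1" "a \<noteq> cnj b" by auto
    show "(\<lambda>(a, b). l2norm (vsub (W a b) (W l m))) x =
       (\<lambda>(a, b). l2norm (vsub (vsc (1 / (a - cnj b))
                                       (vsub (opadj Hp (B (cnj a)) y) (opadj Hp (B b) y)))
                                 (Kloc T Hp Hm Gp Gm (Mi, l) (Pl, m) y))) x"
      using K_MP[OF x(2,3,4) y] by (simp add: x(1) W_def)
  qed
  show ?thesis using tendsto_cong[OF ev] kc by simp
qed

end

theorem theorem4p13:
  fixes T :: "vec \<Rightarrow> vec" and Hp Hm :: "vec set"
    and Gp Gm :: "vec \<times> vec \<Rightarrow> vec" and B :: "complex \<Rightarrow> vec \<Rightarrow> vec"
  assumes "contraction T" and "cnu T"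
    and "boundary_quadruple T Hp Hm Gp Gm"
    and "weyl_function T Hp Hm Gp Gm B"
  defines "K \<equiv> Kloc T Hp Hm Gp Gm"
  shows
   "(\<forall>l m. cmod l < 1 \<longrightarrow> cmod m < 1 \<longrightarrow> (\<forall>y\<in>Hm.
        K (Pl, l) (Pl, m) y = vsc (1 / (1 - l * cnj m)) (vsub y (B l (opadj Hp (B m) y))))) \<and>
    (\<forall>l m. cmod l < 1 \<longrightarrow> cmod m < 1 \<longrightarrow> (\<forall>y\<in>Hp.
        K (Mi, l) (Mi, m) y =
          vsc (1 / (1 - l * cnj m)) (vsub y (opadj Hp (B (cnj l)) (B (cnj m) y))))) \<and>
    (\<forall>l m. cmod l < 1 \<longrightarrow> cmod m < 1 \<longrightarrow> l \<noteq> cnj m \<longrightarrow> (\<forall>y\<in>Hp.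
        K (Pl, l) (Mi, m) y = vsc (1 / (l - cnj m)) (vsub (B l y) (B (cnj m) y)))) \<and>
    (\<forall>l m. cmod l < 1 \<longrightarrow> cmod m < 1 \<longrightarrow> l = cnj m \<longrightarrow> (\<forall>y\<in>Hp.
        ((\<lambda>(a, b). l2norm (vsub (vsc (1 / (a - cnj b)) (vsub (B a y) (B (cnj b) y)))
                                 (K (Pl, l) (Mi, m) y)))
          \<longlongrightarrow> 0) (at (l, m) within {(a, b). cmod a < 1 \<and> cmod b < 1 \<and> a \<noteq> cnj b}))) \<and>
    (\<forall>l m. cmod l < 1 \<longrightarrow> cmod m < 1 \<longrightarrow> l \<noteq> cnj m \<longrightarrow> (\<forall>y\<in>Hm.
        K (Mi, l) (Pl, m) y =
          vsc (1 / (l - cnj m)) (vsub (opadj Hp (B (cnj l)) y) (opadj Hp (B m) y)))) \<and>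
    (\<forall>l m. cmod l < 1 \<longrightarrow> cmod m < 1 \<longrightarrow> l = cnj m \<longrightarrow> (\<forall>y\<in>Hm.
        ((\<lambda>(a, b). l2norm (vsub (vsc (1 / (a - cnj b))
                                       (vsub (opadj Hp (B (cnj a)) y) (opadj Hp (B b) y)))
                                 (K (Mi, l) (Pl, m) y)))
          \<longlongrightarrow> 0) (at (l, m) within {(a, b). cmod a < 1 \<and> cmod b < 1 \<and> a \<noteq> cnj b})))"
proof -
  interpret C: conc T Hp Hm Gp Gm B using assms(3,4) by (rule conc.intro)
  show ?thesis unfolding K_def
    using C.K_PP C.K_MM C.K_PM C.K_MP C.lim_PM C.lim_MP by blast
qed


end
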